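(* Let $\mathcal{G}(t)$ be a matrix-weighted switching network satisfying Assumption 3 (described in the context) that is simultaneously structurally balanced with time-invariant bipartition $\mathcal{V}_1,\mathcal{V}_2$ of $\mathcal{V}$, and consider $\dot{\boldsymbol{x}}(t)=-L(t)\boldsymbol{x}(t)$, $\boldsymbol{x}(t)\in\mathbb{R}^{dn}$. Suppose there exist a subsequence $\{t_{k_l}\}_{l\in\mathbb{N}}$ of $\{t_k\}$ with $t_{k_0}=t_0$ and a number $h>0$ such that $\Delta t_{k_l}=t_{k_{l+1}}-t_{k_l}\le h$ and the integral network of $\mathcal{G}(t)$ over $[t_{k_l},t_{k_{l+1}})$ has a positive-negative spanning tree, for all $l\in\mathbb{N}$. Then the system admits bipartite consensus, and the bipartite consensus value is $$\boldsymbol{x}^*=C\Big(\boldsymbol{1}_n\otimes\Big(\tfrac{1}{n}(\boldsymbol{1}_n^\top\otimes I_d)C\boldsymbol{x}(0)\Big)\Big),$$ where $C=\mathrm{diag}(\sigma_1,\dots,\sigma_n)\in\mathbb{R}^{dn\times dn}$ with $\sigma_i=I_d$ if $i\in\mathcal{V}_1$ and $\sigma_i=-I_d$ if $i\in\mathcal{V}_2$.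
   Context: A matrix-weighted switching network $\mathcal{G}(t)=(\mathcal{V},\mathcal{E}(t),A(t))$ has node set $\mathcal{V}=\{1,\dots,n\}$, $n>1$; each edge $(i,j)\in\mathcal{E}(t)$ carries a symmetric weight $A_{ij}(t)\in\mathbb{R}^{d\times d}$ which is either positive (semi-)definite or negative (semi-)definite, with $A_{ij}=A_{ji}$, $A_{ii}=0$, $A_{ij}(t)=0$ if $(i,j)\notin\mathcal{E}(t)$; standing assumption: for each pair $(i,j)$ the weight $A_{ij}(t)$ has the same sign type for all $t$. Set $|A_{ij}|=A_{ij}$ if $A_{ij}\succeq0$ and $-A_{ij}$ if $A_{ij}\preceq0$; $\mathrm{sgn}(A)$ is $1$, $-1$, $0$ for nonzero PSD, nonzero NSD, zero $A$. With $A=[A_{ij}]\in\mathbb{R}^{dn\times dn}$ and $D=\mathrm{diag}(D_1,\dots,D_n)$, $D_i=\sum_{j:(i,j)\in\mathcal{E}}|A_{ij}|$, the matrix-valued Laplacian is $L=D-A$; $\dot{\boldsymbol{x}}=-L(t)\boldsymbol{x}$ is the stacked form of $\dot{\boldsymbol{x}}_i=-\sum_j|A_{ij}|(\boldsymbol{x}_i-\mathrm{sgn}(A_{ij})\boldsymbol{x}_j)$. Assumption 1: there is a sequence $\{t_k\}_{k\in\mathbb{N}}$ with $t_0=0$, $t_k\to\infty$, $t_{k+1}-t_k\ge\alpha>0$, and $\mathcal{G}(t)$ is constant on each $[t_k,t_{k+1})$. Assumption 2: additionally $\mathcal{G}(t)$ is always chosen from a finite set $\{\mathcal{G}_1,\dots,\mathcal{G}_M\}$,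 each appearing infinitely many times. Assumption 3: Assumptions 1 and 2 hold and each dwell time $t_{k+1}-t_k$ is chosen from a finite set of positive numbers. Integral network over $[t_1,t_2)$: node set $\mathcal{V}$, edges those $(i,j)$ with $\int_{t_1}^{t_2}|A_{ij}(t)|dt$ nonzero (positive semidefinite or definite), weights $\widetilde{A}=\frac{1}{t_2-t_1}\int_{t_1}^{t_2}A(t)dt$. Simultaneously structurally balanced: there is a time-invariant bipartition $\mathcal{V}_1\cup\mathcal{V}_2=\mathcal{V}$, $\mathcal{V}_1\cap\mathcal{V}_2=\emptyset$, such that at all times, weights of edges within each part are positive (semi-)definite and weights of edges between the parts are negative (semi-)definite. A positive-negative spanning tree of a matrix-weighted graph is a spanning tree (connected, all $n$ nodes, $n-1$ edges) each of whose edges has a positive definite or negative definite weight. Bipartite consensus: all limits $\lim_{t\to\infty}\boldsymbol{x}_i(t)$ exist and there is a partition of $\mathcal{V}$ into two parts such that agents in the same part have equal limits and agents in different parts have different limits. *)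

theory Defs
  imports "HOL-Analysis.Analysis"
begin

definition psd_mat :: "real^'d^'d \<Rightarrow> bool" where
  "psd_mat M \<longleftrightarrow> (\<forall>v. 0 \<le> v \<bullet> (M *v v))"

definition nsd_mat :: "real^'d^'d \<Rightarrow> bool" where
  "nsd_mat M \<longleftrightarrow> psd_mat (- M)"

definition pd_mat :: "real^'d^'d \<Rightarrow> bool" where
  "pd_mat M \<longleftrightarrow> (\<forall>v. v \<noteq> 0 \<longrightarrow> 0 < v \<bullet> (M *v v))"

definition nd_mat :: "real^'d^'d \<Rightarrow> bool" where
  "nd_mat M \<longleftrightarrow> pd_mat (- M)"

definition abs_mat :: "real^'d^'d \<Rightarrow> real^'d^'d" where
  "abs_mat M = (if psd_mat M then M else - M)"

definition sgn_mat :: "real^'d^'d \<Rightarrow> real" where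
  "sgn_mat M = (if M = 0 then 0 else if psd_mat M then 1 else -1)"

text \<open>A network is given by its weight function A t i j (edge (i,j) present at t iff A t i j is nonzero).\<close>
definition valid_network :: "(real \<Rightarrow> 'n \<Rightarrow> 'n \<Rightarrow> real^'d^'d) \<Rightarrow> bool" where
  "valid_network A \<longleftrightarrow>
     (\<forall>t i j. transpose (A t i j) = A t i j \<and> (psd_mat (A t i j) \<or> nsd_mat (A t i j))
              \<and> A t i j = A t j i \<and> A t i i = 0) \<and>
     (\<forall>i j. (\<forall>t. psd_mat (A t i j)) \<or> (\<forall>t. nsd_mat (A t i j)))"

definition assumption1 :: "(real \<Rightarrow> 'n \<Rightarrow> 'n \<Rightarrow> real^'d^'d) \<Rightarrow> (nat \<Rightarrow> real) \<Rightarrow> bool" where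
  "assumption1 A tk \<longleftrightarrow>
     tk 0 = 0 \<and> filterlim tk at_top sequentially \<and>
     (\<exists>\<alpha>>0. \<forall>k. tk (Suc k) - tk k \<ge> \<alpha>) \<and>
     (\<forall>k t. tk k \<le> t \<and> t < tk (Suc k) \<longrightarrow> A t = A (tk k))"

definition assumption2 :: "(real \<Rightarrow> 'n \<Rightarrow> 'n \<Rightarrow> real^'d^'d) \<Rightarrow> (nat \<Rightarrow> real) \<Rightarrow> bool" where
  "assumption2 A tk \<longleftrightarrow> assumption1 A tk \<and>
     (\<exists>Gs. finite Gs \<and> (\<forall>k. A (tk k) \<in> Gs) \<and> (\<forall>g\<in>Gs. infinite {k. A (tk k) = g}))"

definition assumption3 :: "(real \<Rightarrow> 'n \<Rightarrow> 'n \<Rightarrow> real^'d^'d) \<Rightarrow> (nat \<Rightarrow> real) \<Rightarrow> bool" where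
  "assumption3 A tk \<longleftrightarrow> assumption1 A tk \<and> assumption2 A tk \<and>
     (\<exists>T. finite T \<and> (\<forall>\<tau>\<in>T. \<tau> > 0) \<and> (\<forall>k. tk (Suc k) - tk k \<in> T))"

definition simultaneously_structurally_balanced ::
  "(real \<Rightarrow> 'n \<Rightarrow> 'n \<Rightarrow> real^'d^'d) \<Rightarrow> 'n set \<Rightarrow> 'n set \<Rightarrow> bool" where
  "simultaneously_structurally_balanced A V1 V2 \<longleftrightarrow>
     V1 \<union> V2 = UNIV \<and> V1 \<inter> V2 = {} \<and>
     (\<forall>t i j. ((i \<in> V1 \<and> j \<in> V1) \<or> (i \<in> V2 \<and> j \<in> V2)) \<longrightarrow> psd_mat (A t i j)) \<and>
     (\<forall>t i j. ((i \<in> V1 \<and> j \<in> V2) \<or> (i \<in> V2 \<and> j \<in> V1)) \<longrightarrow> nsd_mat (A t i j))"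

definition integral_weight :: "(real \<Rightarrow> 'n \<Rightarrow> 'n \<Rightarrow> real^'d^'d) \<Rightarrow> real \<Rightarrow> real \<Rightarrow> 'n \<Rightarrow> 'n \<Rightarrow> real^'d^'d" where
  "integral_weight A t1 t2 i j = (1 / (t2 - t1)) *\<^sub>R integral {t1..t2} (\<lambda>t. A t i j)"

definition integral_edge :: "(real \<Rightarrow> 'n \<Rightarrow> 'n \<Rightarrow> real^'d^'d) \<Rightarrow> real \<Rightarrow> real \<Rightarrow> 'n \<Rightarrow> 'n \<Rightarrow> bool" where
  "integral_edge A t1 t2 i j \<longleftrightarrow> integral {t1..t2} (\<lambda>t. abs_mat (A t i j)) \<noteq> 0"

definition spanning_tree :: "'n::finite set set \<Rightarrow> bool" where
  "spanning_tree T \<longleftrightarrow>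
     (\<forall>e\<in>T. \<exists>u v. u \<noteq> v \<and> e = {u, v}) \<and>
     card T = CARD('n) - 1 \<and>
     (\<forall>i j. (i, j) \<in> {(u, v). {u, v} \<in> T}\<^sup>*)"

definition has_pn_spanning_tree_integral ::
  "(real \<Rightarrow> 'n::finite \<Rightarrow> 'n \<Rightarrow> real^'d^'d) \<Rightarrow> real \<Rightarrow> real \<Rightarrow> bool" where
  "has_pn_spanning_tree_integral A t1 t2 \<longleftrightarrow>
     (\<exists>T. spanning_tree T \<and>
        (\<forall>u v. {u, v} \<in> T \<longrightarrow> integral_edge A t1 t2 u v \<and>
            (pd_mat (integral_weight A t1 t2 u v) \<or> nd_mat (integral_weight A t1 t2 u v))))"

text \<open>x solves dx_i/dt = - sum_j |A_ij| (x_i - sgn(A_ij) x_j) for t \<ge> 0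
  (continuous, with right derivative given by the right-continuous switching signal).\<close>
definition solves_network :: "(real \<Rightarrow> 'n::finite \<Rightarrow> 'n \<Rightarrow> real^'d^'d) \<Rightarrow> (real \<Rightarrow> 'n \<Rightarrow> real^'d) \<Rightarrow> bool" where
  "solves_network A x \<longleftrightarrow>
     (\<forall>i. continuous_on {0..} (\<lambda>t. x t i)) \<and>
     (\<forall>i. \<forall>t\<ge>0. ((\<lambda>s. x s i) has_vector_derivative
         (- (\<Sum>j\<in>UNIV. abs_mat (A t i j) *v (x t i - sgn_mat (A t i j) *\<^sub>R x t j))))
         (at t within {t..}))"

definition bipartite_consensus :: "(real \<Rightarrow> 'n \<Rightarrow> real^'d) \<Rightarrow> bool" where
  "bipartite_consensus x \<longleftrightarrow>
     (\<forall>i. \<exists>l. ((\<lambda>t. x t i) \<longlongrightarrow> l) at_top) \<and>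
     (\<exists>P. \<forall>i j. ((i \<in> P \<longleftrightarrow> j \<in> P) \<longrightarrow> Lim at_top (\<lambda>t. x t i) = Lim at_top (\<lambda>t. x t j)) \<and>
              ((i \<in> P \<longleftrightarrow> j \<notin> P) \<longrightarrow> Lim at_top (\<lambda>t. x t i) \<noteq> Lim at_top (\<lambda>t. x t j)))"

end

theory Submission
  imports Defs
begin

proposition rbound_general:
  fixes f :: "real \<Rightarrow> 'a::real_normed_vector"
  assumes "a < b"
    and f_cont: "continuous_on {a..b} f"
    and phi_cont: "continuous_on {a..b} \<phi>"
    and f': "\<And>x. a \<le> x \<Longrightarrow> x < b \<Longrightarrow> (f has_vector_derivative f' x) (at x within {x..})"
    and phi': "\<And>x. a \<le> x \<Longrightarrow> x < b \<Longrightarrow> (\<phi> has_vector_derivative \<phi>' x) (at x within {x..})"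
    and bnd: "\<And>x. a \<le> x \<Longrightarrow> x < b \<Longrightarrow> norm (f' x) \<le> \<phi>' x"
  shows "norm (f b - f a) \<le> \<phi> b - \<phi> a"
proof -
  note f_tendsto = assms(2)[simplified continuous_on_def, rule_format]
  note phi_tendsto = assms(3)[simplified continuous_on_def, rule_format]
  {
    fix e::real assume "e > 0"
    define e2 where "e2 = e / 2"
    with \<open>e > 0\<close> have "e2 > 0" by simp
    let ?le = "\<lambda>x1. norm (f x1 - f a) \<le> \<phi> x1 - \<phi> a + e * (x1 - a) + e"
    define A where "A = {x2. a \<le> x2 \<and> x2 \<le> b \<and> (\<forall>x1\<in>{a ..< x2}. ?le x1)}"
    have A_subset: "A \<subseteq> {a..b}" by (auto simp: A_def)
    {
      fix x2
      assume a: "a \<le> x2" "x2 \<le> b" and le: "\<forall>x1\<in>{a..<x2}. ?le x1"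
      have "?le x2" using \<open>e > 0\<close>
      proof cases
        assume "x2 \<noteq> a" with a have "a < x2" by simp
        have "at x2 within {a <..<x2}\<noteq> bot"
          using \<open>a < x2\<close>
          by (auto simp: trivial_limit_within islimpt_in_closure)
        moreover
        have "((\<lambda>x1. (\<phi> x1 - \<phi> a) + e * (x1 - a) + e) \<longlongrightarrow> (\<phi> x2 - \<phi> a) + e * (x2 - a) + e) (at x2 within {a <..<x2})"
          "((\<lambda>x1. norm (f x1 - f a)) \<longlongrightarrow> norm (f x2 - f a)) (at x2 within {a <..<x2})"
          using a
          by (auto intro!: tendsto_eq_intros f_tendsto phi_tendsto
            intro: tendsto_within_subset[where S="{a..b}"])
        moreover
        have "eventually (\<lambda>x. x > a) (at x2 within {a <..<x2})"
          by (auto simp: eventually_at_filter)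
        hence "eventually ?le (at x2 within {a <..<x2})"
          unfolding eventually_at_filter
          by eventually_elim (insert le, auto)
        ultimately
        show ?thesis
          by (rule tendsto_le)
      qed simp
    } note le_cont = this
    have "a \<in> A"
      using assms by (auto simp: A_def)
    hence [simp]: "A \<noteq> {}" by auto
    have A_ivl: "\<And>x1 x2. x2 \<in> A \<Longrightarrow> x1 \<in> {a ..x2} \<Longrightarrow> x1 \<in> A"
      by (simp add: A_def)
    have [simp]: "bdd_above A" by (auto simp: A_def)
    define y where "y = Sup A"
    have "y \<le> b"
      unfolding y_def
      by (simp add: cSup_le_iff) (simp add: A_def)
     have leI: "\<And>x x1. a \<le> x1 \<Longrightarrow> x \<in> A \<Longrightarrow> x1 < x \<Longrightarrow> ?le x1"
       by (auto simp: A_def intro!: le_cont)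
    have y_all_le: "\<forall>x1\<in>{a..<y}. ?le x1"
      by (auto simp: y_def less_cSup_iff leI)
    have "a \<le> y"
      by (metis \<open>a \<in> A\<close> \<open>bdd_above A\<close> cSup_upper y_def)
    have "y \<in> A"
      using y_all_le \<open>a \<le> y\<close> \<open>y \<le> b\<close>
      by (auto simp: A_def)
    from le_cont[OF \<open>a \<le> y\<close> \<open>y \<le> b\<close> y_all_le] have le_y: "?le y" .
    have "y = b"
      proof (rule ccontr)
        assume "y \<noteq> b"
        hence "y < b" using \<open>y \<le> b\<close> by simp
        let ?F = "at y within {y..<b}"
        from f' phi'
        have "(f has_vector_derivative f' y) ?F"
          and "(\<phi> has_vector_derivative \<phi>' y) ?F"
          using \<open>a \<le> y\<close> \<open>y < b\<close>
          by (auto intro: has_vector_derivative_within_subset[where S="{y..}"])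
        hence "\<forall>\<^sub>F x1 in ?F. norm (f x1 - f y - (x1 - y) *\<^sub>R f' y) \<le> e2 * \<bar>x1 - y\<bar>"
            "\<forall>\<^sub>F x1 in ?F. norm (\<phi> x1 - \<phi> y - (x1 - y) *\<^sub>R \<phi>' y) \<le> e2 * \<bar>x1 - y\<bar>"
          using \<open>e2 > 0\<close>
          by (auto simp: has_derivative_within_alt2 has_vector_derivative_def)
        moreover
        have "\<forall>\<^sub>F x1 in ?F. y \<le> x1" "\<forall>\<^sub>F x1 in ?F. x1 < b"
          by (auto simp: eventually_at_filter)
        ultimately
        have "\<forall>\<^sub>F x1 in ?F. norm (f x1 - f y) \<le> (\<phi> x1 - \<phi> y) + e * \<bar>x1 - y\<bar>"
          (is "\<forall>\<^sub>F x1 in ?F. ?le' x1")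
        proof eventually_elim
          case (elim x1)
          from norm_triangle_ineq2[THEN order_trans, OF elim(1)]
          have "norm (f x1 - f y) \<le> norm (f' y) * \<bar>x1 - y\<bar> + e2 * \<bar>x1 - y\<bar>"
            by (simp add: ac_simps)
          also have "norm (f' y) \<le> \<phi>' y" using bnd \<open>a \<le> y\<close> \<open>y < b\<close> by simp
          also have "\<phi>' y * \<bar>x1 - y\<bar> \<le> \<phi> x1 - \<phi> y + e2 * \<bar>x1 - y\<bar>"
            using elim by (simp add: ac_simps)
          finally
          have "norm (f x1 - f y) \<le> \<phi> x1 - \<phi> y + e2 * \<bar>x1 - y\<bar> + e2 * \<bar>x1 - y\<bar>"
            by (auto simp: mult_right_mono)
          thus ?case by (simp add: e2_def)
        qed
        moreover have "?le' y" by simp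
        ultimately obtain S
        where S: "open S" "y \<in> S" "\<And>x. x\<in>S \<Longrightarrow> x \<in> {y..<b} \<Longrightarrow> ?le' x"
          unfolding eventually_at_topological
          by metis
        from \<open>open S\<close> obtain d where d: "\<And>x. dist x y < d \<Longrightarrow> x \<in> S" "d > 0"
          by (force simp: dist_commute open_dist ball_def dest!: bspec[OF _ \<open>y \<in> S\<close>])
        define d' where "d' = min ((y + b)/2) (y + (d/2))"
        have "d' \<in> A"
          unfolding A_def
        proof safe
          show "a \<le> d'" using \<open>a \<le> y\<close> \<open>0 < d\<close> \<open>y < b\<close> by (simp add: d'_def)
          show "d' \<le> b" using \<open>y < b\<close> by (simp add: d'_def min_def)
          fix x1
          assume x1: "x1 \<in> {a..<d'}"
          show "?le x1"
          proof (cases "x1 < y")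
            case True
            then show ?thesis
              using \<open>y \<in> A\<close> local.leI x1 by auto
          next
            case False
            hence x1': "x1 \<in> S" "x1 \<in> {y..<b}" using x1
              by (auto simp: d'_def dist_real_def intro!: d)
            have "norm (f x1 - f a) \<le> norm (f x1 - f y) + norm (f y - f a)"
              by (rule order_trans[OF _ norm_triangle_ineq]) simp
            also note S(3)[OF x1']
            also note le_y
            finally show "?le x1"
              using False by (auto simp: algebra_simps)
          qed
        qed
        hence "d' \<le> y"
          unfolding y_def by (rule cSup_upper) simp
        thus False using \<open>d > 0\<close> \<open>y < b\<close>
          by (simp add: d'_def min_def split: if_split_asm)
      qed
    with le_y have "norm (f b - f a) \<le> \<phi> b - \<phi> a + e * (b - a + 1)"
      by (simp add: algebra_simps)
  } note * = this
  show ?thesis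
  proof (rule field_le_epsilon)
    fix e::real assume "e > 0"
    then show "norm (f b - f a) \<le> \<phi> b - \<phi> a + e"
      using *[of "e / (b - a + 1)"] \<open>a < b\<close> by simp
  qed
qed

lemma rbound:
  fixes f :: "real \<Rightarrow> 'a::real_normed_vector"
  assumes "a \<le> b"
    and "continuous_on {a..b} f"
    and "continuous_on {a..b} \<phi>"
    and "\<And>x. a \<le> x \<Longrightarrow> x < b \<Longrightarrow> (f has_vector_derivative f' x) (at x within {x..})"
    and "\<And>x. a \<le> x \<Longrightarrow> x < b \<Longrightarrow> (\<phi> has_vector_derivative \<phi>' x) (at x within {x..})"
    and "\<And>x. a \<le> x \<Longrightarrow> x < b \<Longrightarrow> norm (f' x) \<le> \<phi>' x"
  shows "norm (f b - f a) \<le> \<phi> b - \<phi> a"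
  using rbound_general[of a b f \<phi> f' \<phi>' ] assms
  by (cases "a = b") auto

lemma rmono:
  fixes \<phi> :: "real \<Rightarrow> real"
  assumes "a \<le> b"
    and "continuous_on {a..b} \<phi>"
    and "\<And>x. a \<le> x \<Longrightarrow> x < b \<Longrightarrow> (\<phi> has_vector_derivative \<phi>' x) (at x within {x..})"
    and "\<And>x. a \<le> x \<Longrightarrow> x < b \<Longrightarrow> 0 \<le> \<phi>' x"
  shows "\<phi> a \<le> \<phi> b"
  using rbound[of a b "\<lambda>_. 0::real" \<phi> "\<lambda>_. 0" \<phi>'] assms by auto

lemma sym_dot:
  fixes B :: "real^'d^'d"
  assumes "transpose B = B"
  shows "u \<bullet> (B *v v) = v \<bullet> (B *v u)"
proof -
  have "u \<bullet> (B *v v) = (u v* B) \<bullet> v" by (simp add: dot_lmul_matrix)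
  also have "u v* B = transpose B *v u" by simp
  finally show ?thesis using assms by (simp add: inner_commute)
qed

lemma quad_expand:
  fixes B :: "real^'d^'d"
  assumes "transpose B = B"
  shows "(u + c *\<^sub>R v) \<bullet> (B *v (u + c *\<^sub>R v)) = u \<bullet> (B *v u) + 2 * c * (u \<bullet> (B *v v)) + c^2 * (v \<bullet> (B *v v))"
  using sym_dot[OF assms, of v u]
  by (simp add: algebra_simps inner_add_left inner_add_right power2_eq_square)

lemma psd_cs:
  fixes B :: "real^'d^'d"
  assumes "transpose B = B" "psd_mat B"
  shows "(u \<bullet> (B *v v))^2 \<le> (u \<bullet> (B *v u)) * (v \<bullet> (B *v v))"
proof -
  define a where "a = u \<bullet> (B *v u)"
  define b where "b = u \<bullet> (B *v v)"
  define c where "c = v \<bullet> (B *v v)"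
  have q: "0 \<le> a + 2 * l * b + l^2 * c" for l
    using assms(2) quad_expand[OF assms(1), of u l v] unfolding psd_mat_def a_def b_def c_def
    by metis
  have a0: "0 \<le> a" using assms(2) unfolding psd_mat_def a_def by auto
  have c0: "0 \<le> c" using assms(2) unfolding psd_mat_def c_def by auto
  show ?thesis
  proof (cases "c = 0")
    case True
    have "b = 0"
    proof (rule ccontr)
      assume "b \<noteq> 0"
      have "0 \<le> a + 2 * (- (a + 1) / (2 * b)) * b" using q[of "- (a + 1) / (2 * b)"] True by simp
      also have "\<dots> = -1" using \<open>b \<noteq> 0\<close> by (simp add: field_simps)
      finally show False by simp
    qed
    then show ?thesis unfolding a_def[symmetric] b_def[symmetric] c_def[symmetric] using True by simp
  next
    case False
    with c0 have "c > 0" by simp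
    have "0 \<le> a + 2 * (- b / c) * b + (- b / c)^2 * c" by (rule q)
    also have "\<dots> = a - b^2 / c" using \<open>c > 0\<close> by (simp add: field_simps power2_eq_square)
    finally have "b^2 / c \<le> a" by simp
    then have "b^2 \<le> a * c" using \<open>c > 0\<close> by (simp add: field_simps)
    then show ?thesis unfolding a_def[symmetric] b_def[symmetric] c_def[symmetric] .
  qed
qed

definition mnorm :: "real^'d^'d \<Rightarrow> real" where
  "mnorm B = onorm ((*v) B)"

lemma mnorm_bound: "norm (B *v v) \<le> mnorm B * norm v"
  unfolding mnorm_def by (rule onorm[OF matrix_vector_mul_bounded_linear])

lemma mnorm_nonneg: "0 \<le> mnorm B"
  unfolding mnorm_def by (rule onorm_pos_le[OF matrix_vector_mul_bounded_linear])

lemma quad_le_mnorm: "\<bar>v \<bullet> (B *v v)\<bar> \<le> mnorm B * (norm v)^2"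
proof -
  have "\<bar>v \<bullet> (B *v v)\<bar> \<le> norm v * norm (B *v v)" by (rule Cauchy_Schwarz_ineq2)
  also have "\<dots> \<le> norm v * (mnorm B * norm v)" by (rule mult_left_mono[OF mnorm_bound]) simp
  finally show ?thesis by (simp add: power2_eq_square ac_simps)
qed

lemma psd_Bv:
  fixes B :: "real^'d^'d"
  assumes "transpose B = B" "psd_mat B" "mnorm B \<le> K"
  shows "(norm (B *v v))^2 \<le> K * (v \<bullet> (B *v v))"
proof -
  let ?w = "B *v v"
  have K0: "0 \<le> K" using mnorm_nonneg assms(3) by (rule order_trans)
  have "(norm ?w)^2 = ?w \<bullet> (B *v v)" by (simp add: power2_norm_eq_inner)
  then have "((norm ?w)^2)^2 \<le> (?w \<bullet> (B *v ?w)) * (v \<bullet> (B *v v))"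
    using psd_cs[OF assms(1,2), of ?w v] by simp
  also have "\<dots> \<le> (K * (norm ?w)^2) * (v \<bullet> (B *v v))"
  proof (rule mult_right_mono)
    have "?w \<bullet> (B *v ?w) \<le> mnorm B * (norm ?w)^2" using quad_le_mnorm[of ?w B] by linarith
    also have "\<dots> \<le> K * (norm ?w)^2" by (rule mult_right_mono[OF assms(3)]) simp
    finally show "?w \<bullet> (B *v ?w) \<le> K * (norm ?w)^2" .
    show "0 \<le> v \<bullet> (B *v v)" using assms(2) unfolding psd_mat_def by auto
  qed
  finally have *: "(norm ?w)^2 * (norm ?w)^2 \<le> (norm ?w)^2 * (K * (v \<bullet> (B *v v)))"
    by (simp add: power2_eq_square ac_simps)
  show ?thesis
  proof (cases "norm ?w = 0")
    case True then show ?thesis using K0 assms(2) unfolding psd_mat_def by simp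
  next
    case False
    then have "(norm ?w)^2 > 0" by simp
    then show ?thesis using * by (metis mult_le_cancel_left_pos)
  qed
qed

lemma psd_two:
  fixes B :: "real^'d^'d"
  assumes "transpose B = B" "psd_mat B"
  shows "(u + w) \<bullet> (B *v (u + w)) \<le> 2 * (u \<bullet> (B *v u)) + 2 * (w \<bullet> (B *v w))"
proof -
  have "0 \<le> (u + (-1) *\<^sub>R w) \<bullet> (B *v (u + (-1) *\<^sub>R w))" using assms(2) unfolding psd_mat_def by blast
  then have "0 \<le> u \<bullet> (B *v u) - 2 * (u \<bullet> (B *v w)) + w \<bullet> (B *v w)"
    using quad_expand[OF assms(1), of u "-1" w] by simp
  moreover have "(u + w) \<bullet> (B *v (u + w)) = u \<bullet> (B *v u) + 2 * (u \<bullet> (B *v w)) + w \<bullet> (B *v w)"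
    using quad_expand[OF assms(1), of u 1 w] by simp
  ultimately show ?thesis by linarith
qed

lemma sym_quad_zero:
  fixes B :: "real^'d^'d"
  assumes "transpose B = B" "\<And>v. v \<bullet> (B *v v) = 0"
  shows "B = 0"
proof -
  have "u \<bullet> (B *v v) = 0" for u v
    using quad_expand[OF assms(1), of u 1 v] assms(2)[of "u + v"] assms(2)[of u] assms(2)[of v] by simp
  then have "B *v v = 0" for v by (metis inner_eq_zero_iff)
  then show ?thesis by (metis matrix_vector_mul_lid matrix_vector_mult_0 matrix_eq)
qed

lemma mv_neg: "(- B) *v v = - (B *v (v::real^'d))"
  for B :: "real^'d^'e"
  by (metis diff_0 matrix_vector_mult_0 matrix_vector_mult_diff_rdistrib)

lemma psd_nsd_zero:
  fixes B :: "real^'d^'d"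
  assumes "transpose B = B" "psd_mat B" "nsd_mat B"
  shows "B = 0"
proof (rule sym_quad_zero[OF assms(1)])
  fix v
  have "0 \<le> v \<bullet> (B *v v)" using assms(2) unfolding psd_mat_def by auto
  moreover have "0 \<le> v \<bullet> ((- B) *v v)" using assms(3) unfolding nsd_mat_def psd_mat_def by auto
  then have "v \<bullet> (B *v v) \<le> 0" by (simp add: mv_neg)
  ultimately show "v \<bullet> (B *v v) = 0" by simp
qed

definition gv :: "('n::finite \<Rightarrow> 'n \<Rightarrow> real^'d^'d) \<Rightarrow> ('n \<Rightarrow> real^'d) \<Rightarrow> 'n \<Rightarrow> real^'d" where
  "gv Bc y i = (\<Sum>j\<in>UNIV. Bc i j *v (y i - y j))"

definition Pq :: "('n::finite \<Rightarrow> 'n \<Rightarrow> real^'d^'d) \<Rightarrow> ('n \<Rightarrow> real^'d) \<Rightarrow> real" where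
  "Pq Bc y = (\<Sum>i\<in>UNIV. \<Sum>j\<in>UNIV. (y i - y j) \<bullet> (Bc i j *v (y i - y j)))"

definition En :: "('n::finite \<Rightarrow> real^'d) \<Rightarrow> real" where
  "En y = (\<Sum>i\<in>UNIV. y i \<bullet> y i)"

definition symB :: "('n::finite \<Rightarrow> 'n \<Rightarrow> real^'d^'d) \<Rightarrow> bool" where
  "symB Bc \<longleftrightarrow> (\<forall>i j. transpose (Bc i j) = Bc i j \<and> psd_mat (Bc i j) \<and> Bc i j = Bc j i)"

lemma mv_neg_r: "(Bc::real^'d^'e) *v (- v) = - (Bc *v v)"
  by (metis diff_0 matrix_vector_mult_0_right matrix_vector_mult_diff_distrib)

lemma A1:
  fixes Bc :: "'n::finite \<Rightarrow> 'n \<Rightarrow> real^'d^'d" and y :: "'n \<Rightarrow> real^'d"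
  assumes "symB Bc"
  shows "(\<Sum>i\<in>UNIV. y i \<bullet> gv Bc y i) = Pq Bc y / 2"
proof -
  define f where "f i j = y i \<bullet> (Bc i j *v (y i - y j))" for i j
  have S: "(\<Sum>i\<in>UNIV. y i \<bullet> gv Bc y i) = (\<Sum>i\<in>UNIV. \<Sum>j\<in>UNIV. f i j)"
    unfolding gv_def f_def by (simp add: inner_sum_right)
  also have "\<dots> = (\<Sum>i\<in>UNIV. \<Sum>j\<in>UNIV. f j i)" by (rule sum.swap)
  finally have S2: "(\<Sum>i\<in>UNIV. y i \<bullet> gv Bc y i) = (\<Sum>i\<in>UNIV. \<Sum>j\<in>UNIV. f j i)" .
  have fji: "f j i = - (y j \<bullet> (Bc i j *v (y i - y j)))" for i j
  proof -
    have "Bc j i = Bc i j" using assms unfolding symB_def by metis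
    moreover have "y j - y i = - (y i - y j)" by simp
    ultimately have "f j i = y j \<bullet> (Bc i j *v (- (y i - y j)))" unfolding f_def by metis
    then show ?thesis by (simp only: mv_neg_r inner_minus_right)
  qed
  have "2 * (\<Sum>i\<in>UNIV. y i \<bullet> gv Bc y i) = (\<Sum>i\<in>UNIV. \<Sum>j\<in>UNIV. f i j) + (\<Sum>i\<in>UNIV. \<Sum>j\<in>UNIV. f j i)"
    using S S2 by linarith
  also have "\<dots> = (\<Sum>i\<in>UNIV. \<Sum>j\<in>UNIV. f i j + f j i)" by (simp only: sum.distrib)
  also have "\<dots> = Pq Bc y" 
  proof -
    have "f i j + f j i = (y i - y j) \<bullet> (Bc i j *v (y i - y j))" for i j
      using fji[of j i] unfolding f_def by (simp add: inner_diff_left)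
    then show ?thesis unfolding Pq_def by simp
  qed
  finally show ?thesis by simp
qed

lemma A2:
  fixes Bc :: "'n::finite \<Rightarrow> 'n \<Rightarrow> real^'d^'d" and y :: "'n \<Rightarrow> real^'d"
  assumes "symB Bc"
  shows "(\<Sum>i\<in>UNIV. gv Bc y i) = 0"
proof -
  define f where "f i j = Bc i j *v (y i - y j)" for i j
  have fji: "f j i = - f i j" for i j
  proof -
    have "Bc j i = Bc i j" using assms unfolding symB_def by metis
    moreover have "y j - y i = - (y i - y j)" by simp
    ultimately show ?thesis unfolding f_def by (metis mv_neg_r)
  qed
  have "(\<Sum>i\<in>UNIV. \<Sum>j\<in>UNIV. f i j) = (\<Sum>i\<in>UNIV. \<Sum>j\<in>UNIV. f j i)" by (rule sum.swap)
  also have "\<dots> = (\<Sum>i\<in>UNIV. \<Sum>j\<in>UNIV. - f i j)" by (rule sum.cong[OF refl], rule sum.cong[OF refl], rule fji)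
  also have "\<dots> = - (\<Sum>i\<in>UNIV. \<Sum>j\<in>UNIV. f i j)" by (simp only: sum_negf)
  finally have XX: "(\<Sum>i\<in>UNIV. \<Sum>j\<in>UNIV. f i j) = - (\<Sum>i\<in>UNIV. \<Sum>j\<in>UNIV. f i j)" .
  have "(2::real) *\<^sub>R (\<Sum>i\<in>UNIV. \<Sum>j\<in>UNIV. f i j) = 0"
    by (metis XX scaleR_2 add.right_inverse)
  then have "(\<Sum>i\<in>UNIV. \<Sum>j\<in>UNIV. f i j) = 0" by simp
  then show ?thesis unfolding gv_def f_def by simp
qed

lemma A3:
  fixes Bc :: "'n::finite \<Rightarrow> 'n \<Rightarrow> real^'d^'d" and y :: "'n \<Rightarrow> real^'d"
  assumes "symB Bc"
  shows "(\<Sum>i\<in>UNIV. \<Sum>j\<in>UNIV. (Bc i j *v (y i - y j)) \<bullet> (gv Bc y j - gv Bc y i))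
         = - 2 * (\<Sum>i\<in>UNIV. gv Bc y i \<bullet> gv Bc y i)"
proof -
  define f where "f i j = Bc i j *v (y i - y j)" for i j
  have fji: "f j i = - f i j" for i j
  proof -
    have "Bc j i = Bc i j" using assms unfolding symB_def by metis
    moreover have "y j - y i = - (y i - y j)" by simp
    ultimately show ?thesis unfolding f_def by (metis mv_neg_r)
  qed
  have g: "gv Bc y i = (\<Sum>j\<in>UNIV. f i j)" for i unfolding gv_def f_def ..
  have "(\<Sum>i\<in>UNIV. \<Sum>j\<in>UNIV. f i j \<bullet> gv Bc y j) = (\<Sum>j\<in>UNIV. \<Sum>i\<in>UNIV. f i j \<bullet> gv Bc y j)"
    by (rule sum.swap)
  also have "\<dots> = (\<Sum>j\<in>UNIV. (\<Sum>i\<in>UNIV. f i j) \<bullet> gv Bc y j)" by (simp add: inner_sum_left)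
  also have "\<dots> = (\<Sum>j\<in>UNIV. - (gv Bc y j \<bullet> gv Bc y j))"
  proof -
    have "(\<Sum>i\<in>UNIV. f i j) = - gv Bc y j" for j
    proof -
      have "(\<Sum>i\<in>UNIV. f i j) = (\<Sum>i\<in>UNIV. - f j i)" using fji by (metis minus_minus)
      also have "\<dots> = - gv Bc y j" by (simp only: sum_negf g)
      finally show ?thesis .
    qed
    then show ?thesis by simp
  qed
  finally have X: "(\<Sum>i\<in>UNIV. \<Sum>j\<in>UNIV. f i j \<bullet> gv Bc y j) = - (\<Sum>i\<in>UNIV. gv Bc y i \<bullet> gv Bc y i)"
    by (simp add: sum_negf)
  have Y: "(\<Sum>i\<in>UNIV. \<Sum>j\<in>UNIV. f i j \<bullet> gv Bc y i) = (\<Sum>i\<in>UNIV. gv Bc y i \<bullet> gv Bc y i)"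
    by (simp add: g inner_sum_left)
  have "(\<Sum>i\<in>UNIV. \<Sum>j\<in>UNIV. f i j \<bullet> (gv Bc y j - gv Bc y i))
      = (\<Sum>i\<in>UNIV. \<Sum>j\<in>UNIV. f i j \<bullet> gv Bc y j) - (\<Sum>i\<in>UNIV. \<Sum>j\<in>UNIV. f i j \<bullet> gv Bc y i)"
    by (simp add: inner_diff_right sum_subtractf)
  also have "\<dots> = - 2 * (\<Sum>i\<in>UNIV. gv Bc y i \<bullet> gv Bc y i)" using X Y by simp
  finally show ?thesis unfolding f_def .
qed

lemma Pq_nonneg:
  fixes Bc :: "'n::finite \<Rightarrow> 'n \<Rightarrow> real^'d^'d" and y :: "'n \<Rightarrow> real^'d"
  assumes "symB Bc"
  shows "0 \<le> Pq Bc y"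
  unfolding Pq_def using assms unfolding symB_def psd_mat_def
  by (intro sum_nonneg) auto

lemma A4:
  fixes Bc :: "'n::finite \<Rightarrow> 'n \<Rightarrow> real^'d^'d" and y :: "'n \<Rightarrow> real^'d"
  assumes "symB Bc" "\<And>i j. mnorm (Bc i j) \<le> K"
  shows "norm (gv Bc y i)^2 \<le> real CARD('n) * K * (\<Sum>j\<in>UNIV. (y i - y j) \<bullet> (Bc i j *v (y i - y j)))"
proof -
  have "norm (gv Bc y i) \<le> (\<Sum>j\<in>UNIV. norm (Bc i j *v (y i - y j)))"
    unfolding gv_def by (rule norm_sum)
  then have "norm (gv Bc y i)^2 \<le> (\<Sum>j\<in>UNIV. norm (Bc i j *v (y i - y j)))^2"
    by (simp add: power_mono)
  also have "\<dots> \<le> (\<Sum>j\<in>UNIV. (norm (Bc i j *v (y i - y j)))^2) * real CARD('n)"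
    using sum_squared_le_sum_of_squares[of "\<lambda>j. norm (Bc i j *v (y i - y j))" UNIV] by simp
  also have "\<dots> \<le> (\<Sum>j\<in>UNIV. K * ((y i - y j) \<bullet> (Bc i j *v (y i - y j)))) * real CARD('n)"
    using assms unfolding symB_def
    by (intro mult_right_mono sum_mono psd_Bv) auto
  finally show ?thesis by (simp add: sum_distrib_left ac_simps)
qed

lemma A4':
  fixes Bc :: "'n::finite \<Rightarrow> 'n \<Rightarrow> real^'d^'d" and y :: "'n \<Rightarrow> real^'d"
  assumes "symB Bc" "\<And>i j. mnorm (Bc i j) \<le> K"
  shows "norm (gv Bc y i)^2 \<le> real CARD('n) * K * Pq Bc y"
proof -
  have K0: "0 \<le> K" using assms(2) mnorm_nonneg order_trans by blast
  have "(\<Sum>j\<in>UNIV. (y i - y j) \<bullet> (Bc i j *v (y i - y j))) \<le> Pq Bc y"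
    unfolding Pq_def
    using assms(1) unfolding symB_def psd_mat_def
    by (intro member_le_sum[where f="\<lambda>i. \<Sum>j\<in>UNIV. (y i - y j) \<bullet> (Bc i j *v (y i - y j))"] sum_nonneg) auto
  then show ?thesis using A4[OF assms, of y i] K0
    by (smt (verit) mult_left_mono of_nat_0_le_iff zero_le_mult_iff)
qed

lemma A4sum:
  fixes Bc :: "'n::finite \<Rightarrow> 'n \<Rightarrow> real^'d^'d" and y :: "'n \<Rightarrow> real^'d"
  assumes "symB Bc" "\<And>i j. mnorm (Bc i j) \<le> K"
  shows "(\<Sum>i\<in>UNIV. gv Bc y i \<bullet> gv Bc y i) \<le> real CARD('n) * K * Pq Bc y"
proof -
  have "(\<Sum>i\<in>UNIV. gv Bc y i \<bullet> gv Bc y i) = (\<Sum>i\<in>UNIV. norm (gv Bc y i)^2)"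
    by (simp add: power2_norm_eq_inner)
  also have "\<dots> \<le> (\<Sum>i\<in>UNIV. real CARD('n) * K * (\<Sum>j\<in>UNIV. (y i - y j) \<bullet> (Bc i j *v (y i - y j))))"
    by (intro sum_mono A4[OF assms])
  also have "\<dots> = real CARD('n) * K * Pq Bc y" unfolding Pq_def by (simp add: sum_distrib_left)
  finally show ?thesis .
qed

lemma hvd_inner:
  assumes "(f has_vector_derivative f') (at x within s)" "(g has_vector_derivative g') (at x within s)"
  shows "((\<lambda>x. f x \<bullet> g x) has_vector_derivative (f x \<bullet> g' + f' \<bullet> g x)) (at x within s)"
  by (rule bounded_bilinear.has_vector_derivative[OF bounded_bilinear_inner assms])

lemma hvd_mv:
  fixes M :: "real^'d^'e"
  assumes "(f has_vector_derivative f') F"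
  shows "((\<lambda>x. M *v f x) has_vector_derivative (M *v f')) F"
  by (rule bounded_linear.has_vector_derivative[OF matrix_vector_mul_bounded_linear assms])

lemma cont_mv[continuous_intros]:
  fixes M :: "real^'d^'e"
  assumes "continuous_on S f"
  shows "continuous_on S (\<lambda>x. M *v f x)"
  by (rule bounded_linear.continuous_on[OF matrix_vector_mul_bounded_linear assms])

locale dyn =
  fixes y :: "real \<Rightarrow> 'n::finite \<Rightarrow> real^'d" and Bf :: "real \<Rightarrow> 'n \<Rightarrow> 'n \<Rightarrow> real^'d^'d" and K :: real
  assumes symBf: "\<And>t. symB (Bf t)"
    and Kb: "\<And>t i j. t \<ge> 0 \<Longrightarrow> mnorm (Bf t i j) \<le> K"
    and Kpos: "K > 0"
    and ycont: "\<And>i. continuous_on {0..} (\<lambda>t. y t i)"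
    and yder: "\<And>t i. t \<ge> 0 \<Longrightarrow> ((\<lambda>s. y s i) has_vector_derivative (- gv (Bf t) (y t) i)) (at t within {t..})"
begin

lemma ycont': "0 \<le> a \<Longrightarrow> continuous_on {a..b} (\<lambda>t. y t i)"
  by (rule continuous_on_subset[OF ycont]) auto

lemma E_der:
  assumes "t \<ge> 0"
  shows "((\<lambda>s. En (y s)) has_vector_derivative (- Pq (Bf t) (y t))) (at t within {t..})"
proof -
  have "((\<lambda>s. \<Sum>i\<in>UNIV. y s i \<bullet> y s i) has_vector_derivative
        (\<Sum>i\<in>UNIV. y t i \<bullet> (- gv (Bf t) (y t) i) + (- gv (Bf t) (y t) i) \<bullet> y t i)) (at t within {t..})"
    by (intro has_vector_derivative_sum hvd_inner yder assms)
  moreover have "(\<Sum>i\<in>UNIV. y t i \<bullet> (- gv (Bf t) (y t) i) + (- gv (Bf t) (y t) i) \<bullet> y t i)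
      = - 2 * (\<Sum>i\<in>UNIV. y t i \<bullet> gv (Bf t) (y t) i)"
    by (simp add: inner_commute sum_negf sum_distrib_left)
  moreover have "(\<Sum>i\<in>UNIV. y t i \<bullet> gv (Bf t) (y t) i) = Pq (Bf t) (y t) / 2"
    by (rule A1[OF symBf])
  ultimately show ?thesis unfolding En_def by simp
qed

lemma E_cont: "0 \<le> a \<Longrightarrow> continuous_on {a..b} (\<lambda>s. En (y s))"
  unfolding En_def by (intro continuous_intros ycont')

lemma E_mono:
  assumes "0 \<le> a" "a \<le> b"
  shows "En (y b) \<le> En (y a)"
proof -
  have "(\<lambda>s. - En (y s)) a \<le> (\<lambda>s. - En (y s)) b"
  proof (rule rmono[OF assms(2)])
    show "continuous_on {a..b} (\<lambda>s. - En (y s))" using E_cont[OF assms(1)] by (intro continuous_intros)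
    fix x assume "a \<le> x" "x < b"
    then show "((\<lambda>s. - En (y s)) has_vector_derivative (- (- Pq (Bf x) (y x)))) (at x within {x..})"
      using assms by (intro has_vector_derivative_minus E_der) auto
    show "0 \<le> - (- Pq (Bf x) (y x))" using Pq_nonneg[OF symBf] by simp
  qed
  then show ?thesis by simp
qed

lemma S_const:
  assumes "0 \<le> a" "a \<le> b"
  shows "(\<Sum>i\<in>UNIV. y b i) = (\<Sum>i\<in>UNIV. y a i)"
proof -
  have "norm ((\<Sum>i\<in>UNIV. y b i) - (\<Sum>i\<in>UNIV. y a i)) \<le> (\<lambda>_. 0::real) b - (\<lambda>_. 0::real) a"
  proof (rule rbound[OF assms(2), where f'="\<lambda>x. \<Sum>i\<in>UNIV. - gv (Bf x) (y x) i" and \<phi>'="\<lambda>_. 0"])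
    show "continuous_on {a..b} (\<lambda>s. \<Sum>i\<in>UNIV. y s i)" by (intro continuous_intros ycont' assms)
    show "continuous_on {a..b} (\<lambda>_. 0::real)" by simp
    fix x assume "a \<le> x" "x < b"
    then show "((\<lambda>s. \<Sum>i\<in>UNIV. y s i) has_vector_derivative (\<Sum>i\<in>UNIV. - gv (Bf x) (y x) i)) (at x within {x..})"
      using assms by (intro has_vector_derivative_sum yder) auto
    show "((\<lambda>_. 0::real) has_vector_derivative 0) (at x within {x..})" by simp
    have "(\<Sum>i\<in>UNIV. - gv (Bf x) (y x) i) = 0" using A2[OF symBf] by (simp add: sum_negf)
    then show "norm (\<Sum>i\<in>UNIV. - gv (Bf x) (y x) i) \<le> 0" by simp
  qed
  then show ?thesis by simp
qed

lemma P_der: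
  assumes "t \<ge> 0" "Bf t = Bc"
  shows "((\<lambda>s. Pq Bc (y s)) has_vector_derivative (- 4 * (\<Sum>i\<in>UNIV. gv Bc (y t) i \<bullet> gv Bc (y t) i))) (at t within {t..})"
proof -
  have sB: "symB Bc" using symBf assms(2) by metis
  let ?g = "\<lambda>i. gv Bc (y t) i"
  have ed: "((\<lambda>s. y s i - y s j) has_vector_derivative (?g j - ?g i)) (at t within {t..})" for i j
    using has_vector_derivative_diff[OF yder[OF assms(1), of i] yder[OF assms(1), of j]] assms(2)
    by simp
  have "((\<lambda>s. \<Sum>i\<in>UNIV. \<Sum>j\<in>UNIV. (y s i - y s j) \<bullet> (Bc i j *v (y s i - y s j))) has_vector_derivative
     (\<Sum>i\<in>UNIV. \<Sum>j\<in>UNIV. (y t i - y t j) \<bullet> (Bc i j *v (?g j - ?g i)) + (?g j - ?g i) \<bullet> (Bc i j *v (y t i - y t j))))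
     (at t within {t..})"
    by (intro has_vector_derivative_sum hvd_inner hvd_mv ed)
  moreover have "(\<Sum>i\<in>UNIV. \<Sum>j\<in>UNIV. (y t i - y t j) \<bullet> (Bc i j *v (?g j - ?g i)) + (?g j - ?g i) \<bullet> (Bc i j *v (y t i - y t j)))
      = 2 * (\<Sum>i\<in>UNIV. \<Sum>j\<in>UNIV. (Bc i j *v (y t i - y t j)) \<bullet> (?g j - ?g i))"
  proof -
    have "(y t i - y t j) \<bullet> (Bc i j *v (?g j - ?g i)) = (Bc i j *v (y t i - y t j)) \<bullet> (?g j - ?g i)" for i j
      using sym_dot[of "Bc i j" "y t i - y t j" "?g j - ?g i"] sB unfolding symB_def by (simp add: inner_commute)
    then show ?thesis by (simp add: inner_commute sum_distrib_left)
  qed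
  moreover have "(\<Sum>i\<in>UNIV. \<Sum>j\<in>UNIV. (Bc i j *v (y t i - y t j)) \<bullet> (?g j - ?g i)) = - 2 * (\<Sum>i\<in>UNIV. ?g i \<bullet> ?g i)"
    by (rule A3[OF sB])
  ultimately show ?thesis unfolding Pq_def by simp
qed

lemma P_cont: "0 \<le> a \<Longrightarrow> continuous_on {a..b} (\<lambda>s. Pq Bc (y s))"
  unfolding Pq_def by (intro continuous_intros ycont')

end

lemma hvd_lin: "((\<lambda>s::real. c * (s - a)) has_vector_derivative c) (at x within S)"
proof -
  have "((\<lambda>s::real. c * (s - a)) has_real_derivative c * (1 - 0)) (at x within S)"
    by (intro DERIV_cmult DERIV_diff DERIV_ident DERIV_const)
  then show ?thesis by (simp add: has_real_derivative_iff_has_vector_derivative)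
qed

context dyn
begin

lemma P_mono:
  assumes "0 \<le> a" "\<And>t. a \<le> t \<Longrightarrow> t < b \<Longrightarrow> Bf t = Bf a"
    and "a \<le> t" "t \<le> t'" "t' \<le> b"
  shows "Pq (Bf a) (y t') \<le> Pq (Bf a) (y t)"
proof -
  have "(\<lambda>s. - Pq (Bf a) (y s)) t \<le> (\<lambda>s. - Pq (Bf a) (y s)) t'"
  proof (rule rmono[OF assms(4)])
    show "continuous_on {t..t'} (\<lambda>s. - Pq (Bf a) (y s))" by (rule continuous_on_minus[OF P_cont]) (use assms(1,3) in auto)
    fix x assume x: "t \<le> x" "x < t'"
    have Bx: "Bf x = Bf a" using assms(2)[of x] x assms(3,5) by linarith
    have x0: "0 \<le> x" using x assms(1,3) by linarith
    show "((\<lambda>s. - Pq (Bf a) (y s)) has_vector_derivative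
       (- (- 4 * (\<Sum>i\<in>UNIV. gv (Bf a) (y x) i \<bullet> gv (Bf a) (y x) i)))) (at x within {x..})"
      by (intro has_vector_derivative_minus P_der[OF x0 Bx])
    show "0 \<le> - (- 4 * (\<Sum>i\<in>UNIV. gv (Bf a) (y x) i \<bullet> gv (Bf a) (y x) i))"
      by (simp add: sum_nonneg)
  qed
  then show ?thesis by simp
qed

lemma P_lower:
  assumes "0 \<le> a" "\<And>t. a \<le> t \<Longrightarrow> t < b \<Longrightarrow> Bf t = Bf a"
    and "a \<le> t" "t \<le> b"
  shows "Pq (Bf a) (y a) * (1 - 4 * real CARD('n) * K * (t - a)) \<le> Pq (Bf a) (y t)"
proof -
  define c where "c = 4 * real CARD('n) * K * Pq (Bf a) (y a)"
  have "(\<lambda>s. Pq (Bf a) (y s) + c * (s - a)) a \<le> (\<lambda>s. Pq (Bf a) (y s) + c * (s - a)) t"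
  proof (rule rmono[OF assms(3)])
    show "continuous_on {a..t} (\<lambda>s. Pq (Bf a) (y s) + c * (s - a))"
      by (rule continuous_on_add[OF P_cont]) (use assms in \<open>auto intro!: continuous_intros\<close>)
    fix x assume x: "a \<le> x" "x < t"
    have Bx: "Bf x = Bf a" using assms(2)[of x] x assms(4) by linarith
    have x0: "0 \<le> x" using x assms(1) by linarith
    show "((\<lambda>s. Pq (Bf a) (y s) + c * (s - a)) has_vector_derivative
       (- 4 * (\<Sum>i\<in>UNIV. gv (Bf a) (y x) i \<bullet> gv (Bf a) (y x) i) + c)) (at x within {x..})"
      by (intro has_vector_derivative_add P_der[OF x0 Bx] hvd_lin)
    have "(\<Sum>i\<in>UNIV. gv (Bf a) (y x) i \<bullet> gv (Bf a) (y x) i) \<le> real CARD('n) * K * Pq (Bf a) (y x)"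
      using A4sum[OF symBf Kb[OF assms(1)]] by blast
    also have "\<dots> \<le> real CARD('n) * K * Pq (Bf a) (y a)"
    proof (rule mult_left_mono)
      show "Pq (Bf a) (y x) \<le> Pq (Bf a) (y a)"
        by (rule P_mono[OF assms(1,2), where t=a and t'=x]) (use x assms(3,4) in auto)
      show "0 \<le> real CARD('n) * K" using Kpos by simp
    qed
    finally show "0 \<le> - 4 * (\<Sum>i\<in>UNIV. gv (Bf a) (y x) i \<bullet> gv (Bf a) (y x) i) + c"
      unfolding c_def by simp
  qed
  then show ?thesis unfolding c_def by (simp add: algebra_simps)
qed

lemma diss:
  assumes "0 \<le> a" "\<And>t. a \<le> t \<Longrightarrow> t < b \<Longrightarrow> Bf t = Bf a"
    and "a \<le> c" "c \<le> b" "8 * real CARD('n) * K * (c - a) \<le> 1"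
  shows "(c - a) * Pq (Bf a) (y a) / 2 \<le> En (y a) - En (y c)"
proof -
  define p where "p = Pq (Bf a) (y a) / 2"
  have "(\<lambda>s. - En (y s) - p * (s - a)) a \<le> (\<lambda>s. - En (y s) - p * (s - a)) c"
  proof (rule rmono[OF assms(3)])
    show "continuous_on {a..c} (\<lambda>s. - En (y s) - p * (s - a))"
      by (rule continuous_on_diff[OF continuous_on_minus[OF E_cont]]) (use assms in \<open>auto intro!: continuous_intros\<close>)
    fix x assume x: "a \<le> x" "x < c"
    have Bx: "Bf x = Bf a" using assms(2)[of x] x assms(4) by linarith
    have x0: "0 \<le> x" using x assms(1) by linarith
    show "((\<lambda>s. - En (y s) - p * (s - a)) has_vector_derivative
       (- (- Pq (Bf x) (y x)) - p)) (at x within {x..})"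
      by (intro has_vector_derivative_diff has_vector_derivative_minus E_der[OF x0] hvd_lin)
    have "Pq (Bf a) (y a) * (1 - 4 * real CARD('n) * K * (x - a)) \<le> Pq (Bf a) (y x)"
      by (rule P_lower[OF assms(1,2), where t=x]) (use x assms(3,4) in auto)
    moreover have "1 / 2 \<le> 1 - 4 * real CARD('n) * K * (x - a)"
    proof -
      have "4 * real CARD('n) * K * (x - a) \<le> 4 * real CARD('n) * K * (c - a)"
        using x Kpos by (intro mult_left_mono) simp_all
      then show ?thesis using assms(5) by linarith
    qed
    moreover have "0 \<le> Pq (Bf a) (y a)" by (rule Pq_nonneg[OF symBf])
    ultimately have "Pq (Bf a) (y a) * (1/2) \<le> Pq (Bf a) (y x)"
      using mult_left_mono[of "1/2" "1 - 4 * real CARD('n) * K * (x - a)" "Pq (Bf a) (y a)"] by linarith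
    then show "0 \<le> - (- Pq (Bf x) (y x)) - p" unfolding p_def Bx by simp
  qed
  then show ?thesis unfolding p_def by (simp add: algebra_simps)
qed

lemma vel:
  assumes "t \<ge> 0"
  shows "norm (gv (Bf t) (y t) i)^2 \<le> real CARD('n) * K * Pq (Bf t) (y t)"
  using A4'[OF symBf Kb] assms by auto

end

lemma relpow_bound:
  fixes z :: "'a \<Rightarrow> 'b::real_normed_vector"
  assumes "(i, j) \<in> R ^^ m" "\<And>u v. (u, v) \<in> R \<Longrightarrow> norm (z u - z v) \<le> c"
  shows "norm (z i - z j) \<le> real m * c"
  using assms(1)
proof (induction m arbitrary: j)
  case 0
  then show ?case by simp
next
  case (Suc m)
  from Suc.prems obtain k where k: "(i, k) \<in> R ^^ m" "(k, j) \<in> R" by (rule relpow_Suc_E)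
  have "norm (z i - z j) \<le> norm (z i - z k) + norm (z k - z j)" by (rule norm_diff_triangle_ineq[of "z i" "z k" "z k" "z j", simplified])
  also have "\<dots> \<le> real m * c + c" using Suc.IH[OF k(1)] assms(2)[OF k(2)] by linarith
  finally show ?case by (simp add: algebra_simps)
qed

lemma rtrancl_bound:
  fixes z :: "'a \<Rightarrow> 'b::real_normed_vector"
  assumes "finite R" "(i, j) \<in> R\<^sup>*" "0 \<le> c" "\<And>u v. (u, v) \<in> R \<Longrightarrow> norm (z u - z v) \<le> c"
  shows "norm (z i - z j) \<le> real (card R) * c"
proof -
  obtain m where "(i, j) \<in> R ^^ m" using rtrancl_imp_relpow[OF assms(2)] by blast
  then obtain m' where m': "m' \<le> card R" "(i, j) \<in> R ^^ m'"
    using relpow_finite_bounded[OF assms(1), of m] by blast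
  have "norm (z i - z j) \<le> real m' * c" by (rule relpow_bound[OF m'(2) assms(4)])
  also have "\<dots> \<le> real (card R) * c" using m'(1) assms(3) by (intro mult_right_mono) auto
  finally show ?thesis .
qed

lemma En_dev:
  fixes y :: "'n::finite \<Rightarrow> real^'d"
  assumes "(\<Sum>i\<in>UNIV. y i) = real CARD('n) *\<^sub>R m"
  shows "(\<Sum>i\<in>UNIV. (y i - m) \<bullet> (y i - m)) = En y - real CARD('n) * (m \<bullet> m)"
proof -
  have "(\<Sum>i\<in>UNIV. (y i - m) \<bullet> (y i - m)) = (\<Sum>i\<in>UNIV. y i \<bullet> y i - 2 * (y i \<bullet> m) + m \<bullet> m)"
    by (rule sum.cong) (auto simp: inner_diff_left inner_diff_right inner_commute)
  also have "\<dots> = En y - 2 * ((\<Sum>i\<in>UNIV. y i) \<bullet> m) + real CARD('n) * (m \<bullet> m)"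
    unfolding En_def by (simp add: sum.distrib sum_subtractf sum_distrib_left inner_sum_left)
  also have "\<dots> = En y - real CARD('n) * (m \<bullet> m)" using assms by simp
  finally show ?thesis .
qed

lemma dev_bound:
  fixes y :: "'n::finite \<Rightarrow> real^'d"
  assumes "\<And>j. norm (y i - y j) \<le> C"
  shows "norm (y i - (1 / real CARD('n)) *\<^sub>R (\<Sum>j\<in>UNIV. y j)) \<le> C"
proof -
  have n0: "real CARD('n) > 0" by simp
  have "y i - (1 / real CARD('n)) *\<^sub>R (\<Sum>j\<in>UNIV. y j) = (1 / real CARD('n)) *\<^sub>R (\<Sum>j\<in>UNIV. y i - y j)"
    using n0 by (simp add: sum_subtractf scaleR_diff_right sum_constant_scaleR del: sum_constant)
  then have "norm (y i - (1 / real CARD('n)) *\<^sub>R (\<Sum>j\<in>UNIV. y j)) = (1 / real CARD('n)) * norm (\<Sum>j\<in>UNIV. y i - y j)"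
    by simp
  also have "\<dots> \<le> (1 / real CARD('n)) * (\<Sum>j\<in>UNIV. norm (y i - y j))"
    by (intro mult_left_mono norm_sum) auto
  also have "\<dots> \<le> (1 / real CARD('n)) * (\<Sum>j\<in>(UNIV::'n set). C)"
    by (intro mult_left_mono sum_mono assms) auto
  also have "\<dots> = C" using n0 by simp
  finally show ?thesis .
qed

lemma quad_scale:
  fixes W :: "real^'d^'d"
  shows "(c *\<^sub>R u) \<bullet> (W *v (c *\<^sub>R u)) = c^2 * (u \<bullet> (W *v u))"
  by (simp add: matrix_vector_mult_scaleR power2_eq_square)

lemma pd_bound:
  fixes W :: "real^'d^'d"
  assumes "pd_mat W \<or> nd_mat W"
  shows "\<exists>\<mu>>0. \<forall>v. \<mu> * (norm v)^2 \<le> \<bar>v \<bullet> (W *v v)\<bar>"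
proof -
  define f where "f v = \<bar>v \<bullet> (W *v v)\<bar>" for v :: "real^'d"
  have fpos: "v \<noteq> 0 \<Longrightarrow> 0 < f v" for v
    using assms unfolding f_def pd_mat_def nd_mat_def by (auto simp: mv_neg)
  have "continuous_on (sphere 0 1) f" unfolding f_def
    by (intro continuous_intros cont_mv continuous_on_id)
  moreover have "sphere (0::real^'d) 1 \<noteq> {}"
  proof -
    have "axis undefined (1::real) \<in> sphere (0::real^'d) 1" by simp
    then show ?thesis by blast
  qed
  ultimately obtain x0 where x0: "x0 \<in> sphere 0 1" "\<And>v. v \<in> sphere 0 1 \<Longrightarrow> f x0 \<le> f v"
    using continuous_attains_inf[OF compact_sphere] by blast
  have "x0 \<noteq> 0" using x0(1) by (metis mem_sphere_0 norm_zero zero_neq_one)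
  then have mu: "0 < f x0" using fpos by auto
  have "f x0 * (norm v)^2 \<le> f v" for v
  proof (cases "v = 0")
    case True then show ?thesis unfolding f_def by simp
  next
    case False
    define u where "u = (1 / norm v) *\<^sub>R v"
    have u: "u \<in> sphere 0 1" using False unfolding u_def by simp
    have v: "v = norm v *\<^sub>R u" using False unfolding u_def by simp
    have "f v = f (norm v *\<^sub>R u)" using v by (rule arg_cong)
    also have "\<dots> = (norm v)^2 * f u"
      unfolding f_def by (simp only: quad_scale abs_mult) simp
    finally have "f v = (norm v)^2 * f u" .
    moreover have "f x0 * (norm v)^2 \<le> f u * (norm v)^2" using x0(2)[OF u] by (rule mult_right_mono) simp
    ultimately show ?thesis by (simp add: ac_simps)
  qed
  then show ?thesis using mu unfolding f_def by blast
qed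

lemma finite_min_bound:
  fixes S :: "(real^'d^'d) set"
  assumes "finite S" "\<And>W. W \<in> S \<Longrightarrow> \<exists>\<mu>>0. \<forall>v. \<mu> * (norm v)^2 \<le> \<bar>v \<bullet> (W *v v)\<bar>"
  shows "\<exists>\<mu>>0. \<forall>W\<in>S. \<forall>v. \<mu> * (norm v)^2 \<le> \<bar>v \<bullet> (W *v v)\<bar>"
  using assms
proof (induction S rule: finite_induct)
  case empty
  then show ?case by (auto intro: exI[of _ 1])
next
  case (insert W S)
  have "\<exists>\<mu>>0. \<forall>W\<in>S. \<forall>v. \<mu> * (norm v)^2 \<le> \<bar>v \<bullet> (W *v v)\<bar>"
    by (rule insert.IH) (use insert.prems in blast)
  then obtain \<mu>1 where m1: "\<mu>1 > 0" "\<forall>W\<in>S. \<forall>v. \<mu>1 * (norm v)^2 \<le> \<bar>v \<bullet> (W *v v)\<bar>"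
    by blast
  obtain \<mu>2 where m2: "\<mu>2 > 0" "\<forall>v. \<mu>2 * (norm v)^2 \<le> \<bar>v \<bullet> (W *v v)\<bar>"
    using insert.prems[of W] by blast
  have "\<forall>W'\<in>insert W S. \<forall>v. min \<mu>1 \<mu>2 * (norm v)^2 \<le> \<bar>v \<bullet> (W' *v v)\<bar>"
  proof (intro ballI allI)
    fix W' and v :: "real^'d" assume "W' \<in> insert W S"
    moreover have "min \<mu>1 \<mu>2 * (norm v)^2 \<le> \<mu>1 * (norm v)^2" "min \<mu>1 \<mu>2 * (norm v)^2 \<le> \<mu>2 * (norm v)^2"
      by (auto intro: mult_right_mono)
    ultimately show "min \<mu>1 \<mu>2 * (norm v)^2 \<le> \<bar>v \<bullet> (W' *v v)\<bar>" using m1 m2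
      by (metis insertE order_trans)
  qed
  then show ?case using m1 m2 by (intro exI[of _ "min \<mu>1 \<mu>2"]) auto
qed

locale ctx =
  fixes A :: "real \<Rightarrow> 'n::finite \<Rightarrow> 'n \<Rightarrow> real^'d^'d"
    and tk :: "nat \<Rightarrow> real"
    and V1 V2 :: "'n set"
    and x :: "real \<Rightarrow> 'n \<Rightarrow> real^'d"
    and kl :: "nat \<Rightarrow> nat"
    and h :: real
  assumes card_gt: "CARD('n) > 1"
    and valid: "valid_network A"
    and as3: "assumption3 A tk"
    and ssb: "simultaneously_structurally_balanced A V1 V2"
    and sol: "solves_network A x"
    and klm: "strict_mono kl" and kl0: "kl 0 = 0" and hpos: "h > 0"
    and hb: "\<forall>l. tk (kl (Suc l)) - tk (kl l) \<le> h"
    and tree: "\<forall>l. has_pn_spanning_tree_integral A (tk (kl l)) (tk (kl (Suc l)))"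
begin

definition sig :: "'n \<Rightarrow> real" where "sig i = (if i \<in> V1 then 1 else -1)"
definition yy :: "real \<Rightarrow> 'n \<Rightarrow> real^'d" where "yy t i = sig i *\<^sub>R x t i"
definition BB :: "real \<Rightarrow> 'n \<Rightarrow> 'n \<Rightarrow> real^'d^'d" where "BB t i j = abs_mat (A t i j)"

lemma as1: "assumption1 A tk" using as3 unfolding assumption3_def by blast
lemma as2: "assumption2 A tk" using as3 unfolding assumption3_def by blast

definition alpha :: real where "alpha = (SOME \<alpha>. \<alpha> > 0 \<and> (\<forall>k. tk (Suc k) - tk k \<ge> \<alpha>))"

lemma alpha: "alpha > 0" "\<And>k. tk (Suc k) - tk k \<ge> alpha"
proof -
  have "\<exists>\<alpha>. \<alpha> > 0 \<and> (\<forall>k. tk (Suc k) - tk k \<ge> \<alpha>)" using as1 unfolding assumption1_def by blast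
  then have "alpha > 0 \<and> (\<forall>k. tk (Suc k) - tk k \<ge> alpha)" unfolding alpha_def by (rule someI_ex)
  then show "alpha > 0" "\<And>k. tk (Suc k) - tk k \<ge> alpha" by auto
qed

lemma tk0: "tk 0 = 0" using as1 unfolding assumption1_def by blast

lemma A_piece: "tk k \<le> t \<Longrightarrow> t < tk (Suc k) \<Longrightarrow> A t = A (tk k)"
  using as1 unfolding assumption1_def by blast

lemma tk_ge: "tk k \<ge> real k * alpha"
proof (induction k)
  case 0 then show ?case using tk0 by simp
next
  case (Suc k) then show ?case using alpha(2)[of k] by (simp add: algebra_simps)
qed

lemma tk_gap: "i \<le> j \<Longrightarrow> tk i + real (j - i) * alpha \<le> tk j"
proof (induction j)
  case 0 then show ?case by simp
next
  case (Suc j)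
  show ?case
  proof (cases "i = Suc j")
    case True then show ?thesis by simp
  next
    case False
    then have "i \<le> j" using Suc.prems by simp
    then have "tk i + real (j - i) * alpha \<le> tk j" by (rule Suc.IH)
    moreover have "real (Suc j - i) = real (j - i) + 1" using \<open>i \<le> j\<close> by simp
    ultimately show ?thesis using alpha(2)[of j] by (simp add: algebra_simps)
  qed
qed

lemma tk_mono: "i \<le> j \<Longrightarrow> tk i \<le> tk j"
proof -
  assume "i \<le> j"
  then have "tk i + real (j - i) * alpha \<le> tk j" by (rule tk_gap)
  moreover have "0 \<le> real (j - i) * alpha" using alpha(1) by simp
  ultimately show ?thesis by linarith
qed

lemma tk_strict: "i < j \<Longrightarrow> tk i < tk j"
proof -
  assume "i < j"
  then have "tk i + real (j - i) * alpha \<le> tk j" by (intro tk_gap) simp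
  moreover have "0 < real (j - i) * alpha" using \<open>i < j\<close> alpha(1) by simp
  ultimately show ?thesis by linarith
qed

lemma tk_nonneg: "0 \<le> tk k" using tk_mono[of 0 k] tk0 by simp

lemma piece_ex:
  assumes "0 \<le> t"
  shows "\<exists>k. tk k \<le> t \<and> t < tk (Suc k)"
proof -
  define S where "S = {k. tk k \<le> t}"
  have "S \<subseteq> {..nat \<lceil>t / alpha\<rceil>}"
  proof
    fix k assume "k \<in> S"
    then have "real k * alpha \<le> t" using tk_ge[of k] unfolding S_def by simp
    then have "real k \<le> t / alpha" using alpha(1) by (simp add: field_simps)
    then show "k \<in> {..nat \<lceil>t / alpha\<rceil>}" by (simp add: le_nat_iff le_ceiling_iff)
  qed
  then have fin: "finite S" by (rule finite_subset) simp
  have "0 \<in> S" using assms tk0 unfolding S_def by simp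
  define k where "k = Max S"
  have "k \<in> S" unfolding k_def using fin \<open>0 \<in> S\<close> by (intro Max_in) auto
  moreover have "Suc k \<notin> S" using fin unfolding k_def by (metis Max_ge Suc_n_not_le_n)
  ultimately show ?thesis unfolding S_def by auto
qed

lemma valid_facts: "transpose (A t i j) = A t i j" "psd_mat (A t i j) \<or> nsd_mat (A t i j)"
   "A t i j = A t j i" "A t i i = 0"
  using valid unfolding valid_network_def by blast+

lemma BB_facts: "transpose (BB t i j) = BB t i j" "psd_mat (BB t i j)" "BB t i j = BB t j i"
proof -
  show "transpose (BB t i j) = BB t i j" using valid_facts(1)[of t i j]
    unfolding BB_def abs_mat_def by (simp add: transpose_def vec_eq_iff)
  show "psd_mat (BB t i j)" using valid_facts(2)[of t i j] unfolding BB_def abs_mat_def nsd_mat_def by auto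
  show "BB t i j = BB t j i" using valid_facts(3)[of t i j] unfolding BB_def by simp
qed

lemma symBB: "symB (BB t)" unfolding symB_def using BB_facts by blast

definition Kc :: real where
  "Kc = 1 + (\<Sum>g\<in>(SOME Gs. finite Gs \<and> (\<forall>k. A (tk k) \<in> Gs) \<and> (\<forall>g\<in>Gs. infinite {k. A (tk k) = g})).
              \<Sum>i\<in>UNIV. \<Sum>j\<in>UNIV. mnorm (abs_mat (g i j)))"

definition Gs :: "('n \<Rightarrow> 'n \<Rightarrow> real^'d^'d) set" where
  "Gs = (SOME Gs. finite Gs \<and> (\<forall>k. A (tk k) \<in> Gs) \<and> (\<forall>g\<in>Gs. infinite {k. A (tk k) = g}))"

lemma Gs: "finite Gs" "\<And>k. A (tk k) \<in> Gs"
proof -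
  have "\<exists>Gs. finite Gs \<and> (\<forall>k. A (tk k) \<in> Gs) \<and> (\<forall>g\<in>Gs. infinite {k. A (tk k) = g})"
    using as2 unfolding assumption2_def by blast
  then have "finite Gs \<and> (\<forall>k. A (tk k) \<in> Gs) \<and> (\<forall>g\<in>Gs. infinite {k. A (tk k) = g})"
    unfolding Gs_def by (rule someI_ex)
  then show "finite Gs" "\<And>k. A (tk k) \<in> Gs" by auto
qed

lemma Kc_pos: "Kc > 0"
  unfolding Kc_def Gs_def[symmetric] by (smt (verit) mnorm_nonneg sum_nonneg)

lemma Kc_bound:
  assumes "0 \<le> t"
  shows "mnorm (BB t i j) \<le> Kc"
proof -
  obtain k where k: "tk k \<le> t" "t < tk (Suc k)" using piece_ex[OF assms] by blast
  have g: "A t \<in> Gs" using A_piece[OF k] Gs(2)[of k] by simp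
  have "mnorm (BB t i j) = mnorm (abs_mat (A t i j))" unfolding BB_def ..
  also have "\<dots> \<le> (\<Sum>j'\<in>UNIV. mnorm (abs_mat (A t i j')))"
    by (rule member_le_sum) (auto simp: mnorm_nonneg)
  also have "\<dots> \<le> (\<Sum>i'\<in>UNIV. \<Sum>j'\<in>UNIV. mnorm (abs_mat (A t i' j')))"
    by (rule member_le_sum[where f="\<lambda>i'. \<Sum>j'\<in>UNIV. mnorm (abs_mat (A t i' j'))"]) (auto intro: sum_nonneg simp: mnorm_nonneg)
  also have "\<dots> \<le> (\<Sum>g\<in>Gs. \<Sum>i'\<in>UNIV. \<Sum>j'\<in>UNIV. mnorm (abs_mat (g i' j')))"
    by (rule member_le_sum[where f="\<lambda>g. \<Sum>i'\<in>UNIV. \<Sum>j'\<in>UNIV. mnorm (abs_mat (g i' j'))", OF g _ Gs(1)])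
      (auto intro!: sum_nonneg simp: mnorm_nonneg)
  also have "\<dots> \<le> Kc" unfolding Kc_def Gs_def[symmetric] by simp
  finally show ?thesis .
qed

lemma sig_sq: "sig i * sig i = 1" unfolding sig_def by simp

lemma parts: "i \<notin> V1 \<Longrightarrow> i \<in> V2" "i \<in> V2 \<Longrightarrow> i \<notin> V1"
  using ssb unfolding simultaneously_structurally_balanced_def by blast+

lemma sign_term:
  "sig i *\<^sub>R (BB t i j *v (x t i - sgn_mat (A t i j) *\<^sub>R x t j)) = BB t i j *v (yy t i - yy t j)"
proof (cases "A t i j = 0")
  case True
  then have "BB t i j = 0" unfolding BB_def abs_mat_def psd_mat_def by simp
  then show ?thesis by simp
next
  case nz: False
  show ?thesis
  proof (cases "(i \<in> V1 \<and> j \<in> V1) \<or> (i \<in> V2 \<and> j \<in> V2)")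
    case True
    then have "psd_mat (A t i j)" using ssb unfolding simultaneously_structurally_balanced_def by blast
    then have s: "sgn_mat (A t i j) = 1" using nz unfolding sgn_mat_def by simp
    have "sig i = sig j" using True parts unfolding sig_def by auto
    then show ?thesis unfolding yy_def s
      by (simp add: matrix_vector_mult_scaleR matrix_vector_mult_diff_distrib scaleR_diff_right)
  next
    case False
    then have "(i \<in> V1 \<and> j \<in> V2) \<or> (i \<in> V2 \<and> j \<in> V1)" using parts by blast
    then have ns: "nsd_mat (A t i j)" using ssb unfolding simultaneously_structurally_balanced_def by blast
    have "\<not> psd_mat (A t i j)" using psd_nsd_zero[OF valid_facts(1) _ ns] nz by blast
    then have s: "sgn_mat (A t i j) = -1" using nz unfolding sgn_mat_def by simp
    have "sig j = - sig i" using False parts unfolding sig_def by auto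
    then show ?thesis unfolding yy_def s
      by (simp add: matrix_vector_mult_scaleR matrix_vector_mult_diff_distrib scaleR_diff_right
          matrix_vector_right_distrib scaleR_add_right)
  qed
qed

lemma yy_der:
  assumes "0 \<le> t"
  shows "((\<lambda>s. yy s i) has_vector_derivative (- gv (BB t) (yy t) i)) (at t within {t..})"
proof -
  have "((\<lambda>s. x s i) has_vector_derivative
         (- (\<Sum>j\<in>UNIV. abs_mat (A t i j) *v (x t i - sgn_mat (A t i j) *\<^sub>R x t j))))
         (at t within {t..})"
    using sol assms unfolding solves_network_def by blast
  then have "((\<lambda>s. sig i *\<^sub>R x s i) has_vector_derivative
         sig i *\<^sub>R (- (\<Sum>j\<in>UNIV. abs_mat (A t i j) *v (x t i - sgn_mat (A t i j) *\<^sub>R x t j))))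
         (at t within {t..})"
    by (rule bounded_linear.has_vector_derivative[OF bounded_linear_scaleR_right])
  moreover have "sig i *\<^sub>R (- (\<Sum>j\<in>UNIV. abs_mat (A t i j) *v (x t i - sgn_mat (A t i j) *\<^sub>R x t j)))
      = - gv (BB t) (yy t) i"
    unfolding gv_def using sign_term[of i t] unfolding BB_def
    by (simp add: scaleR_sum_right)
  ultimately show ?thesis unfolding yy_def by simp
qed

lemma yy_cont: "continuous_on {0..} (\<lambda>t. yy t i)"
  unfolding yy_def using sol unfolding solves_network_def by (intro continuous_intros) auto

sublocale dyn yy BB Kc
  by unfold_locales (auto simp: symBB Kc_bound Kc_pos yy_cont yy_der)

end

context ctx
begin

definition delta :: real where "delta = min alpha (1 / (8 * real CARD('n) * Kc))"

lemma delta: "delta > 0" "delta \<le> alpha" "8 * real CARD('n) * Kc * delta \<le> 1"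
proof -
  have p: "8 * real CARD('n) * Kc > 0" using Kc_pos by simp
  show "delta > 0" unfolding delta_def using alpha(1) p by simp
  show "delta \<le> alpha" unfolding delta_def by simp
  have "delta \<le> 1 / (8 * real CARD('n) * Kc)" unfolding delta_def by simp
  then show "8 * real CARD('n) * Kc * delta \<le> 1" using p by (simp add: field_simps)
qed

lemma BB_piece: "tk k \<le> t \<Longrightarrow> t < tk (Suc k) \<Longrightarrow> BB t = BB (tk k)"
  unfolding BB_def using A_piece by (intro ext) simp

lemma piece_diss: "Pq (BB (tk k)) (yy (tk k)) \<le> 2 * (En (yy (tk k)) - En (yy (tk (Suc k)))) / delta"
proof -
  have gap: "tk k + delta \<le> tk (Suc k)" using alpha(2)[of k] delta(2) by linarith
  have "(tk k + delta - tk k) * Pq (BB (tk k)) (yy (tk k)) / 2 \<le> En (yy (tk k)) - En (yy (tk k + delta))"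
  proof (rule diss[OF tk_nonneg, where b="tk (Suc k)"])
    show "\<And>t. tk k \<le> t \<Longrightarrow> t < tk (Suc k) \<Longrightarrow> BB t = BB (tk k)" by (rule BB_piece)
    show "tk k \<le> tk k + delta" using delta(1) by simp
    show "tk k + delta \<le> tk (Suc k)" by (rule gap)
    show "8 * real CARD('n) * Kc * (tk k + delta - tk k) \<le> 1" using delta(3) by simp
  qed
  moreover have "En (yy (tk (Suc k))) \<le> En (yy (tk k + delta))"
    by (rule E_mono) (use tk_nonneg[of k] delta(1) gap in auto)
  ultimately have "delta * Pq (BB (tk k)) (yy (tk k)) / 2 \<le> En (yy (tk k)) - En (yy (tk (Suc k)))"
    by simp
  then show ?thesis using delta(1) by (simp add: field_simps)
qed

lemma Pcur:
  assumes "tk k \<le> t" "t < tk (Suc k)"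
  shows "Pq (BB t) (yy t) \<le> 2 * (En (yy (tk k)) - En (yy (tk (Suc k)))) / delta"
proof -
  have "Pq (BB t) (yy t) = Pq (BB (tk k)) (yy t)" using BB_piece[OF assms] by simp
  also have "\<dots> \<le> Pq (BB (tk k)) (yy (tk k))"
    by (rule P_mono[OF tk_nonneg, where b="tk (Suc k)"]) (use assms BB_piece in auto)
  also have "\<dots> \<le> 2 * (En (yy (tk k)) - En (yy (tk (Suc k)))) / delta" by (rule piece_diss)
  finally show ?thesis .
qed

definition sl :: "nat \<Rightarrow> real" where "sl l = tk (kl l)"
definition Dl :: "nat \<Rightarrow> real" where "Dl l = En (yy (sl l)) - En (yy (sl (Suc l)))"

lemma sl_lt: "sl l < sl (Suc l)"
  unfolding sl_def using klm by (intro tk_strict) (simp add: strict_mono_def)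

lemma sl_nonneg: "0 \<le> sl l" unfolding sl_def by (rule tk_nonneg)

lemma sl_len: "sl (Suc l) - sl l \<le> h" "alpha \<le> sl (Suc l) - sl l"
proof -
  show "sl (Suc l) - sl l \<le> h" using hb unfolding sl_def by blast
  have "kl l < kl (Suc l)" using klm by (simp add: strict_mono_def)
  then have "tk (kl l) + real (kl (Suc l) - kl l) * alpha \<le> tk (kl (Suc l))" by (intro tk_gap) simp
  moreover have "1 \<le> real (kl (Suc l) - kl l)" using \<open>kl l < kl (Suc l)\<close> by simp
  moreover have "1 * alpha \<le> real (kl (Suc l) - kl l) * alpha"
    using \<open>1 \<le> real (kl (Suc l) - kl l)\<close> alpha(1) by (intro mult_right_mono) auto
  ultimately show "alpha \<le> sl (Suc l) - sl l" unfolding sl_def by linarith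
qed

lemma Dl_nonneg: "0 \<le> Dl l"
  unfolding Dl_def using E_mono[OF sl_nonneg, of l "sl (Suc l)"] sl_lt[of l] by simp

lemma interval_piece:
  assumes "sl l \<le> t" "t < sl (Suc l)"
  shows "\<exists>k. kl l \<le> k \<and> Suc k \<le> kl (Suc l) \<and> tk k \<le> t \<and> t < tk (Suc k)"
proof -
  obtain k where k: "tk k \<le> t" "t < tk (Suc k)" using piece_ex[of t] assms sl_nonneg[of l] by auto
  have "kl l \<le> k"
  proof (rule ccontr)
    assume "\<not> kl l \<le> k"
    then have "Suc k \<le> kl l" by simp
    then have "tk (Suc k) \<le> sl l" unfolding sl_def by (rule tk_mono)
    then show False using k assms by simp
  qed
  moreover have "Suc k \<le> kl (Suc l)"
  proof (rule ccontr)
    assume "\<not> Suc k \<le> kl (Suc l)"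
    then have "kl (Suc l) \<le> k" by simp
    then have "sl (Suc l) \<le> tk k" unfolding sl_def by (rule tk_mono)
    then show False using k assms by simp
  qed
  ultimately show ?thesis using k by blast
qed

lemma Pcur_l:
  assumes "sl l \<le> t" "t < sl (Suc l)"
  shows "Pq (BB t) (yy t) \<le> 2 * Dl l / delta"
proof -
  obtain k where k: "kl l \<le> k" "Suc k \<le> kl (Suc l)" "tk k \<le> t" "t < tk (Suc k)"
    using interval_piece[OF assms] by blast
  have "Pq (BB t) (yy t) \<le> 2 * (En (yy (tk k)) - En (yy (tk (Suc k)))) / delta" by (rule Pcur[OF k(3,4)])
  also have "\<dots> \<le> 2 * Dl l / delta"
  proof -
    have "En (yy (tk k)) \<le> En (yy (sl l))"
      by (rule E_mono[OF sl_nonneg]) (unfold sl_def, rule tk_mono[OF k(1)])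
    moreover have "En (yy (sl (Suc l))) \<le> En (yy (tk (Suc k)))"
      by (rule E_mono[OF tk_nonneg]) (unfold sl_def, rule tk_mono[OF k(2)])
    ultimately show ?thesis unfolding Dl_def using delta(1) by (simp add: divide_right_mono)
  qed
  finally show ?thesis .
qed

definition Mv :: "nat \<Rightarrow> real" where "Mv l = sqrt (real CARD('n) * Kc * (2 * Dl l / delta))"

lemma Mv_nonneg: "0 \<le> Mv l"
  unfolding Mv_def using Kc_pos Dl_nonneg[of l] delta(1) by simp

lemma Mv_sq: "(Mv l)^2 = real CARD('n) * Kc * (2 * Dl l / delta)"
  unfolding Mv_def using Kc_pos Dl_nonneg[of l] delta(1) by simp

lemma move:
  assumes "sl l \<le> t" "t \<le> sl (Suc l)"
  shows "norm (yy t i - yy (sl l) i) \<le> Mv l * (t - sl l)"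
proof -
  have "norm (yy t i - yy (sl l) i) \<le> Mv l * (t - sl l) - Mv l * (sl l - sl l)"
  proof (rule rbound[OF assms(1), where f'="\<lambda>s. - gv (BB s) (yy s) i" and \<phi>'="\<lambda>_. Mv l"])
    show "continuous_on {sl l..t} (\<lambda>t. yy t i)" by (rule ycont'[OF sl_nonneg])
    show "continuous_on {sl l..t} (\<lambda>s. Mv l * (s - sl l))" by (intro continuous_intros)
    fix s assume s: "sl l \<le> s" "s < t"
    show "((\<lambda>t. yy t i) has_vector_derivative - gv (BB s) (yy s) i) (at s within {s..})"
      by (rule yy_der) (use s sl_nonneg[of l] in linarith)
    show "((\<lambda>s. Mv l * (s - sl l)) has_vector_derivative Mv l) (at s within {s..})" by (rule hvd_lin)
    have "norm (gv (BB s) (yy s) i)^2 \<le> real CARD('n) * Kc * Pq (BB s) (yy s)"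
      by (rule vel) (use s sl_nonneg[of l] in linarith)
    also have "\<dots> \<le> real CARD('n) * Kc * (2 * Dl l / delta)"
      using Pcur_l[of l s] s assms Kc_pos by (intro mult_left_mono) auto
    finally have "norm (gv (BB s) (yy s) i) \<le> Mv l" unfolding Mv_def by (rule real_le_rsqrt)
    then show "norm (- gv (BB s) (yy s) i) \<le> Mv l" by simp
  qed
  then show ?thesis by simp
qed

lemma move_h:
  assumes "sl l \<le> t" "t \<le> sl (Suc l)"
  shows "norm (yy t i - yy (sl l) i) \<le> Mv l * h"
proof -
  have "norm (yy t i - yy (sl l) i) \<le> Mv l * (t - sl l)" by (rule move[OF assms])
  also have "\<dots> \<le> Mv l * h" using assms sl_len(1)[of l] Mv_nonneg[of l] by (intro mult_left_mono) auto
  finally show ?thesis .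
qed

definition C1 :: real where "C1 = 4 / delta + 16 * real CARD('n) * Kc^2 * h^2 / delta"

lemma term_le_Pq:
  assumes "symB Bc"
  shows "(z u - z v) \<bullet> (Bc u v *v (z u - z v)) \<le> Pq Bc z"
proof -
  have nn: "0 \<le> (z i - z j) \<bullet> (Bc i j *v (z i - z j))" for i j
    using assms unfolding symB_def psd_mat_def by blast
  have "(z u - z v) \<bullet> (Bc u v *v (z u - z v)) \<le> (\<Sum>j\<in>UNIV. (z u - z j) \<bullet> (Bc u j *v (z u - z j)))"
    by (rule member_le_sum[where f="\<lambda>j. (z u - z j) \<bullet> (Bc u j *v (z u - z j))"]) (auto intro: nn)
  also have "\<dots> \<le> Pq Bc z" unfolding Pq_def
    by (rule member_le_sum[where f="\<lambda>i. \<Sum>j\<in>UNIV. (z i - z j) \<bullet> (Bc i j *v (z i - z j))"])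
      (auto intro!: sum_nonneg nn)
  finally show ?thesis .
qed

lemma edge_pt:
  assumes "sl l \<le> t" "t < sl (Suc l)"
  shows "(yy (sl l) u - yy (sl l) v) \<bullet> (BB t u v *v (yy (sl l) u - yy (sl l) v)) \<le> C1 * Dl l"
proof -
  define e where "e = yy (sl l) u - yy (sl l) v"
  define et where "et = yy t u - yy t v"
  define dd where "dd = e - et"
  have sB: "transpose (BB t u v) = BB t u v" "psd_mat (BB t u v)" using BB_facts by auto
  have t0: "0 \<le> t" using assms sl_nonneg[of l] by linarith
  have "e \<bullet> (BB t u v *v e) = (et + dd) \<bullet> (BB t u v *v (et + dd))" unfolding dd_def by simp
  also have "\<dots> \<le> 2 * (et \<bullet> (BB t u v *v et)) + 2 * (dd \<bullet> (BB t u v *v dd))" by (rule psd_two[OF sB])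
  also have "\<dots> \<le> 2 * (2 * Dl l / delta) + 2 * (Kc * (2 * Mv l * h)^2)"
  proof (rule add_mono)
    have "et \<bullet> (BB t u v *v et) \<le> Pq (BB t) (yy t)" unfolding et_def by (rule term_le_Pq[OF symBB])
    also have "\<dots> \<le> 2 * Dl l / delta" by (rule Pcur_l[OF assms])
    finally show "2 * (et \<bullet> (BB t u v *v et)) \<le> 2 * (2 * Dl l / delta)" by simp
    have "norm dd \<le> norm (yy t u - yy (sl l) u) + norm (yy t v - yy (sl l) v)"
    proof -
      have "dd = - (yy t u - yy (sl l) u) + (yy t v - yy (sl l) v)" unfolding dd_def e_def et_def by simp
      then show ?thesis by (metis norm_minus_cancel norm_triangle_ineq)
    qed
    also have "\<dots> \<le> Mv l * h + Mv l * h" using assms by (intro add_mono move_h) auto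
    finally have nd: "norm dd \<le> 2 * Mv l * h" by (simp add: algebra_simps)
    have "dd \<bullet> (BB t u v *v dd) \<le> mnorm (BB t u v) * (norm dd)^2" using quad_le_mnorm[of dd "BB t u v"] by linarith
    also have "\<dots> \<le> Kc * (2 * Mv l * h)^2"
      by (intro mult_mono Kc_bound t0 power_mono nd) (auto simp: Kc_pos less_imp_le)
    finally show "2 * (dd \<bullet> (BB t u v *v dd)) \<le> 2 * (Kc * (2 * Mv l * h)^2)" by simp
  qed
  also have "\<dots> = C1 * Dl l"
  proof -
    have "(2 * Mv l * h)^2 = 4 * h^2 * (Mv l)^2" by (simp add: power2_eq_square)
    then show ?thesis unfolding C1_def Mv_sq by (simp add: field_simps power2_eq_square)
  qed
  finally show ?thesis unfolding e_def .
qed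

end

lemma bl_quad: "bounded_linear (\<lambda>M::real^'d^'d. e \<bullet> (M *v e))"
proof -
  have "linear (\<lambda>M::real^'d^'d. e \<bullet> (M *v e))"
    by (rule linearI) (simp_all add: matrix_vector_mult_add_rdistrib inner_add_right
        scaleR_matrix_vector_assoc[symmetric])
  then show ?thesis by (simp add: linear_conv_bounded_linear)
qed

definition Fw :: "(real \<times> ('n \<Rightarrow> 'n \<Rightarrow> real^'d^'d)) list \<Rightarrow> 'n \<Rightarrow> 'n \<Rightarrow> real^'d^'d" where
  "Fw L u v = (1 / sum_list (map fst L)) *\<^sub>R sum_list (map (\<lambda>p. fst p *\<^sub>R snd p u v) L)"

context ctx
begin

lemma int_piece:
  assumes "m \<le> m'"
  shows "((\<lambda>t. A t u v) has_integral (\<Sum>k\<in>{m..<m'}. (tk (Suc k) - tk k) *\<^sub>R A (tk k) u v)) {tk m..tk m'}"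
  using assms
proof (induction m' rule: dec_induct)
  case base
  then show ?case using has_integral_refl(1)[of "\<lambda>t. A t u v" "tk m"] by simp
next
  case (step n)
  have p: "((\<lambda>t. A t u v) has_integral ((tk (Suc n) - tk n) *\<^sub>R A (tk n) u v)) {tk n..tk (Suc n)}"
  proof -
    have c: "((\<lambda>t. A (tk n) u v) has_integral ((tk (Suc n) - tk n) *\<^sub>R A (tk n) u v)) {tk n..tk (Suc n)}"
      using has_integral_const_real[of "A (tk n) u v" "tk n" "tk (Suc n)"] tk_mono[of n "Suc n"]
      by (simp add: content_real)
    have e: "A t u v = A (tk n) u v" if "t \<in> {tk n..tk (Suc n)} - {tk (Suc n)}" for t
      using that A_piece[of n t] by auto
    show ?thesis
      by (rule has_integral_spike_finite[where S="{tk (Suc n)}" and f="\<lambda>t. A (tk n) u v", OF _ e c]) simp_all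
  qed
  have "((\<lambda>t. A t u v) has_integral (\<Sum>k\<in>{m..<n}. (tk (Suc k) - tk k) *\<^sub>R A (tk k) u v) + (tk (Suc n) - tk n) *\<^sub>R A (tk n) u v) {tk m..tk (Suc n)}"
    by (rule has_integral_combine[OF tk_mono[OF step(1)] tk_mono[of n "Suc n"] step.IH p]) simp
  then show ?case using step(1) by (simp add: sum.atLeastLessThan_Suc)
qed

definition Lst :: "nat \<Rightarrow> (real \<times> ('n \<Rightarrow> 'n \<Rightarrow> real^'d^'d)) list" where
  "Lst l = map (\<lambda>k. (tk (Suc k) - tk k, A (tk k))) [kl l..<kl (Suc l)]"

lemma kl_le: "kl l \<le> kl (Suc l)" using klm by (simp add: strict_mono_def less_imp_le)

lemma int_sl: "((\<lambda>t. A t u v) has_integral (\<Sum>k\<in>{kl l..<kl (Suc l)}. (tk (Suc k) - tk k) *\<^sub>R A (tk k) u v)) {sl l..sl (Suc l)}"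
  unfolding sl_def by (rule int_piece[OF kl_le])

lemma weight_Fw: "integral_weight A (sl l) (sl (Suc l)) u v = Fw (Lst l) u v"
proof -
  have "integral {sl l..sl (Suc l)} (\<lambda>t. A t u v) = (\<Sum>k\<in>{kl l..<kl (Suc l)}. (tk (Suc k) - tk k) *\<^sub>R A (tk k) u v)"
    by (rule integral_unique[OF int_sl])
  also have "\<dots> = sum_list (map (\<lambda>p. fst p *\<^sub>R snd p u v) (Lst l))"
    unfolding Lst_def by (simp add: sum_set_upt_conv_sum_list_nat[symmetric] o_def)
  finally have I: "integral {sl l..sl (Suc l)} (\<lambda>t. A t u v) = sum_list (map (\<lambda>p. fst p *\<^sub>R snd p u v) (Lst l))" .
  have "sl (Suc l) - sl l = (\<Sum>k\<in>{kl l..<kl (Suc l)}. tk (Suc k) - tk k)"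
    unfolding sl_def by (rule sum_Suc_diff'[OF kl_le, symmetric])
  also have "\<dots> = sum_list (map fst (Lst l))"
    unfolding Lst_def by (simp add: sum_set_upt_conv_sum_list_nat[symmetric] o_def)
  finally show ?thesis unfolding integral_weight_def Fw_def I by simp
qed

definition Tset :: "real set" where
  "Tset = (SOME T. finite T \<and> (\<forall>\<tau>\<in>T. \<tau> > 0) \<and> (\<forall>k. tk (Suc k) - tk k \<in> T))"

lemma Tset: "finite Tset" "\<And>k. tk (Suc k) - tk k \<in> Tset"
proof -
  have "\<exists>T. finite T \<and> (\<forall>\<tau>\<in>T. \<tau> > 0) \<and> (\<forall>k. tk (Suc k) - tk k \<in> T)"
    using as3 unfolding assumption3_def by blast
  then have "finite Tset \<and> (\<forall>\<tau>\<in>Tset. \<tau> > 0) \<and> (\<forall>k. tk (Suc k) - tk k \<in> Tset)"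
    unfolding Tset_def by (rule someI_ex)
  then show "finite Tset" "\<And>k. tk (Suc k) - tk k \<in> Tset" by auto
qed

definition Nn :: nat where "Nn = nat \<lceil>h / alpha\<rceil>"

lemma Lst_len: "length (Lst l) \<le> Nn"
proof -
  have "tk (kl l) + real (kl (Suc l) - kl l) * alpha \<le> tk (kl (Suc l))" by (rule tk_gap[OF kl_le])
  then have "real (kl (Suc l) - kl l) * alpha \<le> h" using sl_len(1)[of l] unfolding sl_def by linarith
  then have "real (kl (Suc l) - kl l) \<le> h / alpha" using alpha(1) by (simp add: field_simps)
  then have "kl (Suc l) - kl l \<le> Nn" unfolding Nn_def by (simp add: le_nat_iff le_ceiling_iff)
  then show ?thesis unfolding Lst_def by simp
qed

definition Wset :: "(real^'d^'d) set" where
  "Wset = (\<lambda>(L, u, v). Fw L u v) ` ({L. set L \<subseteq> Tset \<times> Gs \<and> length L \<le> Nn} \<times> UNIV \<times> UNIV)"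

lemma Wset_finite: "finite Wset"
  unfolding Wset_def using finite_lists_length_le[of "Tset \<times> Gs" Nn] Tset(1) Gs(1) by simp

lemma weight_in_Wset: "integral_weight A (sl l) (sl (Suc l)) u v \<in> Wset"
proof -
  have "set (Lst l) \<subseteq> Tset \<times> Gs" unfolding Lst_def using Tset(2) Gs(2) by auto
  then have "(Lst l, u, v) \<in> {L. set L \<subseteq> Tset \<times> Gs \<and> length L \<le> Nn} \<times> UNIV \<times> UNIV"
    using Lst_len by auto
  then show ?thesis unfolding weight_Fw Wset_def by (rule image_eqI[rotated]) simp
qed

definition mu :: real where
  "mu = (SOME \<mu>. \<mu> > 0 \<and> (\<forall>W\<in>{W\<in>Wset. pd_mat W \<or> nd_mat W}. \<forall>v. \<mu> * (norm v)^2 \<le> \<bar>v \<bullet> (W *v v)\<bar>))"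

lemma mu: "mu > 0" "\<And>W v. W \<in> Wset \<Longrightarrow> pd_mat W \<or> nd_mat W \<Longrightarrow> mu * (norm v)^2 \<le> \<bar>v \<bullet> (W *v v)\<bar>"
proof -
  have "\<exists>\<mu>>0. \<forall>W\<in>{W\<in>Wset. pd_mat W \<or> nd_mat W}. \<forall>v. \<mu> * (norm v)^2 \<le> \<bar>v \<bullet> (W *v v)\<bar>"
    by (rule finite_min_bound) (use Wset_finite pd_bound in auto)
  then have "mu > 0 \<and> (\<forall>W\<in>{W\<in>Wset. pd_mat W \<or> nd_mat W}. \<forall>v. mu * (norm v)^2 \<le> \<bar>v \<bullet> (W *v v)\<bar>)"
    unfolding mu_def by (rule someI_ex)
  then show "mu > 0" "\<And>W v. W \<in> Wset \<Longrightarrow> pd_mat W \<or> nd_mat W \<Longrightarrow> mu * (norm v)^2 \<le> \<bar>v \<bullet> (W *v v)\<bar>"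
    by auto
qed

lemma BB_scale: "\<exists>c. \<bar>c\<bar> = 1 \<and> (\<forall>t. BB t u v = c *\<^sub>R A t u v)"
proof (cases "\<forall>t. psd_mat (A t u v)")
  case True
  then show ?thesis unfolding BB_def abs_mat_def by (intro exI[of _ 1]) auto
next
  case False
  then have ns: "\<forall>t. nsd_mat (A t u v)" using valid unfolding valid_network_def by blast
  have "BB t u v = (-1) *\<^sub>R A t u v" for t
  proof (cases "psd_mat (A t u v)")
    case True
    then have "A t u v = 0" using psd_nsd_zero[OF valid_facts(1) True] ns by blast
    then show ?thesis unfolding BB_def abs_mat_def by simp
  next
    case False
    then show ?thesis unfolding BB_def abs_mat_def by simp
  qed
  then show ?thesis by (intro exI[of _ "-1"]) auto
qed

lemma C1_nonneg: "0 \<le> C1" unfolding C1_def using delta(1) Kc_pos by simp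

lemma tree_edge:
  assumes "pd_mat (integral_weight A (sl l) (sl (Suc l)) u v) \<or> nd_mat (integral_weight A (sl l) (sl (Suc l)) u v)"
  shows "alpha * mu * (norm (yy (sl l) u - yy (sl l) v))^2 \<le> h * C1 * Dl l"
proof -
  define e where "e = yy (sl l) u - yy (sl l) v"
  define s where "s = sl l"
  define s' where "s' = sl (Suc l)"
  define len where "len = s' - s"
  define SA where "SA = (\<Sum>k\<in>{kl l..<kl (Suc l)}. (tk (Suc k) - tk k) *\<^sub>R A (tk k) u v)"
  define W where "W = integral_weight A (sl l) (sl (Suc l)) u v"
  have len: "alpha \<le> len" "len \<le> h" unfolding len_def s_def s'_def using sl_len by auto
  have lenpos: "0 < len" using len alpha(1) by linarith
  have HA: "((\<lambda>t. A t u v) has_integral SA) {s..s'}" unfolding SA_def s_def s'_def by (rule int_sl)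
  have "W = (1 / len) *\<^sub>R SA" unfolding W_def integral_weight_def len_def s_def s'_def SA_def
    using integral_unique[OF int_sl] by simp
  then have SAW: "SA = len *\<^sub>R W" using lenpos by simp
  obtain c where c: "\<bar>c\<bar> = 1" "\<And>t. BB t u v = c *\<^sub>R A t u v" using BB_scale by blast
  have H1: "((\<lambda>t. e \<bullet> (A t u v *v e)) has_integral (e \<bullet> (SA *v e))) {s..s'}"
    using has_integral_linear[OF HA bl_quad[of e]] by (simp add: o_def)
  have H2: "((\<lambda>t. e \<bullet> (BB t u v *v e)) has_integral (c * (e \<bullet> (SA *v e)))) {s..s'}"
  proof -
    have "((\<lambda>t. c * (e \<bullet> (A t u v *v e))) has_integral (c * (e \<bullet> (SA *v e)))) {s..s'}"
      by (rule has_integral_mult_right[OF H1])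
    moreover have "e \<bullet> (BB t u v *v e) = c * (e \<bullet> (A t u v *v e))" for t
      by (simp add: c(2) scaleR_matrix_vector_assoc[symmetric])
    ultimately show ?thesis by simp
  qed
  have nonneg: "0 \<le> c * (e \<bullet> (SA *v e))"
    by (rule has_integral_nonneg[OF H2]) (use BB_facts(2) in \<open>auto simp: psd_mat_def\<close>)
  have upper: "c * (e \<bullet> (SA *v e)) \<le> len * (C1 * Dl l)"
  proof -
    define g where "g t = (if t = s' then 0 else e \<bullet> (BB t u v *v e))" for t
    have Hg: "(g has_integral (c * (e \<bullet> (SA *v e)))) {s..s'}"
      by (rule has_integral_spike_finite[where S="{s'}", OF _ _ H2]) (simp_all add: g_def)
    have Hc: "((\<lambda>t. C1 * Dl l) has_integral (len * (C1 * Dl l))) {s..s'}"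
      using has_integral_const_real[of "C1 * Dl l" s s'] lenpos unfolding len_def by (simp add: content_real)
    show ?thesis
    proof (rule has_integral_le[OF Hg Hc])
      fix t assume t: "t \<in> {s..s'}"
      show "g t \<le> C1 * Dl l"
      proof (cases "t = s'")
        case True then show ?thesis unfolding g_def using C1_nonneg Dl_nonneg by simp
      next
        case False
        then have "sl l \<le> t" "t < sl (Suc l)" using t unfolding s_def s'_def by auto
        then show ?thesis unfolding g_def e_def using False edge_pt by simp
      qed
    qed
  qed
  have q: "e \<bullet> (SA *v e) = len * (e \<bullet> (W *v e))"
    unfolding SAW by (simp add: scaleR_matrix_vector_assoc[symmetric])
  have WW: "W \<in> Wset" unfolding W_def by (rule weight_in_Wset)
  have mub: "mu * (norm e)^2 \<le> \<bar>e \<bullet> (W *v e)\<bar>" using mu(2)[OF WW] assms unfolding W_def by blast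
  have "c * (e \<bullet> (SA *v e)) = \<bar>c * (e \<bullet> (SA *v e))\<bar>" using nonneg by simp
  also have "\<dots> = len * \<bar>e \<bullet> (W *v e)\<bar>" using c(1) lenpos unfolding q by (simp add: abs_mult)
  finally have eq: "c * (e \<bullet> (SA *v e)) = len * \<bar>e \<bullet> (W *v e)\<bar>" .
  have "alpha * mu * (norm e)^2 = alpha * (mu * (norm e)^2)" by simp
  also have "\<dots> \<le> len * \<bar>e \<bullet> (W *v e)\<bar>"
    using len(1) mub alpha(1) mu(1) by (intro mult_mono) auto
  also have "\<dots> \<le> len * (C1 * Dl l)" using eq upper by simp
  also have "\<dots> \<le> h * (C1 * Dl l)" using len(2) C1_nonneg Dl_nonneg[of l] by (intro mult_right_mono) auto
  finally show ?thesis unfolding e_def by simp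
qed

end

context ctx
begin

definition m0 :: "real^'d" where "m0 = (1 / real CARD('n)) *\<^sub>R (\<Sum>j\<in>UNIV. yy 0 j)"
definition Vf :: "real \<Rightarrow> real" where "Vf t = (\<Sum>i\<in>UNIV. (yy t i - m0) \<bullet> (yy t i - m0))"

lemma sum_yy: "0 \<le> t \<Longrightarrow> (\<Sum>i\<in>UNIV. yy t i) = real CARD('n) *\<^sub>R m0"
  unfolding m0_def using S_const[of 0 t] by simp

lemma m0_eq: "0 \<le> t \<Longrightarrow> m0 = (1 / real CARD('n)) *\<^sub>R (\<Sum>j\<in>UNIV. yy t j)"
  using sum_yy by simp

lemma Vf_eq: "0 \<le> t \<Longrightarrow> Vf t = En (yy t) - real CARD('n) * (m0 \<bullet> m0)"
  unfolding Vf_def by (rule En_dev[OF sum_yy])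

lemma Vf_nonneg: "0 \<le> Vf t" unfolding Vf_def by (intro sum_nonneg) simp

lemma Vf_mono: "0 \<le> a \<Longrightarrow> a \<le> b \<Longrightarrow> Vf b \<le> Vf a"
  using Vf_eq[of a] Vf_eq[of b] E_mono[of a b] by simp

lemma Dl_V: "Dl l = Vf (sl l) - Vf (sl (Suc l))"
  unfolding Dl_def using Vf_eq[OF sl_nonneg[of l]] Vf_eq[OF sl_nonneg[of "Suc l"]] by simp

definition c8 :: real where "c8 = h * C1 / (alpha * mu)"
definition Nr :: real where "Nr = real (card (UNIV :: ('n \<times> 'n) set))"

lemma c8_nonneg: "0 \<le> c8" unfolding c8_def using hpos C1_nonneg alpha(1) mu(1) by simp

lemma pair_bound: "norm (yy (sl l) i - yy (sl l) j) \<le> Nr * sqrt (c8 * Dl l)"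
proof -
  obtain T where T: "spanning_tree T"
    and E: "\<And>u v. {u, v} \<in> T \<Longrightarrow> pd_mat (integral_weight A (sl l) (sl (Suc l)) u v) \<or> nd_mat (integral_weight A (sl l) (sl (Suc l)) u v)"
    using tree unfolding has_pn_spanning_tree_integral_def sl_def by blast
  define R where "R = {(u, v). {u, v} \<in> T}"
  have fin: "finite R" by simp
  have conn: "(i, j) \<in> R\<^sup>*" using T unfolding spanning_tree_def R_def by blast
  have eb: "norm (yy (sl l) u - yy (sl l) v) \<le> sqrt (c8 * Dl l)" if "(u, v) \<in> R" for u v
  proof -
    have "alpha * mu * (norm (yy (sl l) u - yy (sl l) v))^2 \<le> h * C1 * Dl l"
      by (rule tree_edge) (use E that in \<open>auto simp: R_def\<close>)
    then have "(norm (yy (sl l) u - yy (sl l) v))^2 \<le> c8 * Dl l"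
      unfolding c8_def using alpha(1) mu(1) by (simp add: field_simps)
    then show ?thesis by (rule real_le_rsqrt)
  qed
  have "norm (yy (sl l) i - yy (sl l) j) \<le> real (card R) * sqrt (c8 * Dl l)"
    by (rule rtrancl_bound[OF fin conn _ eb]) (use c8_nonneg Dl_nonneg[of l] in simp)
  also have "\<dots> \<le> Nr * sqrt (c8 * Dl l)"
  proof (rule mult_right_mono)
    have "card R \<le> card (UNIV :: ('n \<times> 'n) set)" by (rule card_mono) auto
    then show "real (card R) \<le> Nr" unfolding Nr_def by (simp only: of_nat_le_iff)
    show "0 \<le> sqrt (c8 * Dl l)" using c8_nonneg Dl_nonneg[of l] by simp
  qed
  finally show ?thesis .
qed

definition c9 :: real where "c9 = real CARD('n) * Nr^2 * c8 + 1"

lemma c9_ge: "1 \<le> c9" unfolding c9_def using c8_nonneg by simp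

lemma V_bound: "Vf (sl l) \<le> c9 * Dl l"
proof -
  let ?C = "Nr * sqrt (c8 * Dl l)"
  have C0: "0 \<le> ?C" unfolding Nr_def using c8_nonneg Dl_nonneg[of l] by simp
  have "(yy (sl l) i - m0) \<bullet> (yy (sl l) i - m0) \<le> ?C^2" for i
  proof -
    have "norm (yy (sl l) i - m0) \<le> ?C"
      unfolding m0_eq[OF sl_nonneg[of l]] by (rule dev_bound) (rule pair_bound)
    then have "(norm (yy (sl l) i - m0))^2 \<le> ?C^2" by (rule power_mono) simp
    then show ?thesis by (simp add: power2_norm_eq_inner)
  qed
  then have "Vf (sl l) \<le> (\<Sum>i\<in>(UNIV::'n set). ?C^2)" unfolding Vf_def by (intro sum_mono)
  also have "\<dots> = real CARD('n) * Nr^2 * (c8 * Dl l)"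
    using c8_nonneg Dl_nonneg[of l] by (simp add: power_mult_distrib)
  also have "\<dots> \<le> c9 * Dl l" unfolding c9_def using Dl_nonneg[of l] by (simp add: algebra_simps)
  finally show ?thesis .
qed

definition rho :: real where "rho = 1 - 1 / c9"

lemma rho: "0 \<le> rho" "rho < 1" unfolding rho_def using c9_ge by (auto simp: field_simps)

lemma contract: "Vf (sl (Suc l)) \<le> rho * Vf (sl l)"
proof -
  have "Vf (sl l) \<le> c9 * (Vf (sl l) - Vf (sl (Suc l)))" using V_bound[of l] unfolding Dl_V .
  then show ?thesis unfolding rho_def using c9_ge by (simp add: field_simps)
qed

lemma sl0: "sl 0 = 0" unfolding sl_def using kl0 tk0 by simp

lemma geom: "Vf (sl l) \<le> rho^l * Vf 0"
proof (induction l)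
  case 0 then show ?case using sl0 by simp
next
  case (Suc l)
  have "Vf (sl (Suc l)) \<le> rho * Vf (sl l)" by (rule contract)
  also have "\<dots> \<le> rho * (rho^l * Vf 0)" using Suc.IH rho(1) by (rule mult_left_mono)
  finally show ?case by simp
qed

lemma Vf_lim: "(Vf \<longlongrightarrow> 0) at_top"
proof (rule order_tendstoI)
  fix a :: real assume "a < 0"
  then show "\<forall>\<^sub>F t in at_top. a < Vf t" using Vf_nonneg by (auto intro: always_eventually less_le_trans)
next
  fix a :: real assume a: "0 < a"
  have "(\<lambda>l. rho^l * Vf 0) \<longlonglongrightarrow> 0 * Vf 0"
    by (intro tendsto_mult LIMSEQ_power_zero tendsto_const) (use rho in simp)
  then have "\<forall>\<^sub>F l in sequentially. rho^l * Vf 0 < a" using a by (simp add: order_tendstoD(2))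
  then obtain L where L: "rho^L * Vf 0 < a" by (auto simp: eventually_sequentially)
  have "\<forall>t\<ge>sl L. Vf t < a"
  proof (intro allI impI)
    fix t assume "sl L \<le> t"
    then have "Vf t \<le> Vf (sl L)" using sl_nonneg by (intro Vf_mono) auto
    also have "\<dots> \<le> rho^L * Vf 0" by (rule geom)
    finally show "Vf t < a" using L by simp
  qed
  then show "\<forall>\<^sub>F t in at_top. Vf t < a" by (auto simp: eventually_at_top_linorder)
qed

lemma yy_lim: "((\<lambda>t. yy t i) \<longlongrightarrow> m0) at_top"
proof -
  have "((\<lambda>t. yy t i - m0) \<longlongrightarrow> 0) at_top"
  proof (rule Lim_null_comparison)
    show "\<forall>\<^sub>F t in at_top. norm (yy t i - m0) \<le> sqrt (Vf t)"
    proof (rule always_eventually, rule allI)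
      fix t
      have "(yy t i - m0) \<bullet> (yy t i - m0) \<le> Vf t" unfolding Vf_def
        by (rule member_le_sum[where f="\<lambda>i. (yy t i - m0) \<bullet> (yy t i - m0)"]) auto
      then have "(norm (yy t i - m0))^2 \<le> Vf t" by (simp add: power2_norm_eq_inner)
      then show "norm (yy t i - m0) \<le> sqrt (Vf t)" by (rule real_le_rsqrt)
    qed
    show "((\<lambda>t. sqrt (Vf t)) \<longlongrightarrow> 0) at_top" using tendsto_real_sqrt[OF Vf_lim] by simp
  qed
  then show ?thesis by (simp add: LIM_zero_iff)
qed

lemma x_lim: "((\<lambda>t. x t i) \<longlongrightarrow> sig i *\<^sub>R m0) at_top"
proof -
  have "((\<lambda>t. sig i *\<^sub>R yy t i) \<longlongrightarrow> sig i *\<^sub>R m0) at_top" by (intro tendsto_scaleR tendsto_const yy_lim)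
  moreover have "sig i *\<^sub>R yy t i = x t i" for t unfolding yy_def using sig_sq[of i] by simp
  ultimately show ?thesis by simp
qed

lemma m0_v: "m0 = (1 / real CARD('n)) *\<^sub>R (\<Sum>j\<in>UNIV. sig j *\<^sub>R x 0 j)"
  unfolding m0_def yy_def ..

lemma final:
  "bipartite_consensus x \<and>
    (let \<sigma> = (\<lambda>i. if i \<in> V1 then (1::real) else -1);
         v = (1 / real CARD('n)) *\<^sub>R (\<Sum>j\<in>UNIV. \<sigma> j *\<^sub>R x 0 j)
     in \<forall>i. ((\<lambda>t. x t i) \<longlongrightarrow> \<sigma> i *\<^sub>R v) at_top)"
proof -
  have sigeq: "(\<lambda>i. if i \<in> V1 then (1::real) else -1) = sig" unfolding sig_def by (rule ext) simp
  have lims: "Lim at_top (\<lambda>t. x t i) = sig i *\<^sub>R m0" for i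
    by (rule tendsto_Lim[OF trivial_limit_at_top_linorder x_lim])
  have bc: "bipartite_consensus x"
    unfolding bipartite_consensus_def
  proof (intro conjI)
    show "\<forall>i. \<exists>l. ((\<lambda>t. x t i) \<longlongrightarrow> l) at_top" using x_lim by blast
    show "\<exists>P. \<forall>i j. ((i \<in> P \<longleftrightarrow> j \<in> P) \<longrightarrow> Lim at_top (\<lambda>t. x t i) = Lim at_top (\<lambda>t. x t j)) \<and>
              ((i \<in> P \<longleftrightarrow> j \<notin> P) \<longrightarrow> Lim at_top (\<lambda>t. x t i) \<noteq> Lim at_top (\<lambda>t. x t j))"
    proof (cases "m0 = 0")
      case True
      then show ?thesis by (intro exI[of _ UNIV]) (simp add: lims)
    next
      case False
      show ?thesis
      proof (intro exI[of _ V1] allI conjI impI)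
        fix i j
        assume "i \<in> V1 \<longleftrightarrow> j \<in> V1"
        then have "sig i = sig j" unfolding sig_def by simp
        then show "Lim at_top (\<lambda>t. x t i) = Lim at_top (\<lambda>t. x t j)" by (simp add: lims)
      next
        fix i j
        assume "i \<in> V1 \<longleftrightarrow> j \<notin> V1"
        then have "sig j = - sig i" "sig i \<noteq> 0" unfolding sig_def by auto
        then have d: "sig i - sig j \<noteq> 0" by simp
        have "sig i *\<^sub>R m0 \<noteq> sig j *\<^sub>R m0"
        proof
          assume "sig i *\<^sub>R m0 = sig j *\<^sub>R m0"
          then have "(sig i - sig j) *\<^sub>R m0 = 0" by (simp add: scaleR_diff_left)
          then show False using d False by simp
        qed
        then show "Lim at_top (\<lambda>t. x t i) \<noteq> Lim at_top (\<lambda>t. x t j)" unfolding lims .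
      qed
    qed
  qed
  show ?thesis unfolding Let_def sigeq m0_v[symmetric] using bc x_lim by blast
qed

end

theorem corollary17:
  fixes A :: "real \<Rightarrow> 'n::finite \<Rightarrow> 'n \<Rightarrow> real^'d^'d"
    and tk :: "nat \<Rightarrow> real"
    and V1 V2 :: "'n set"
    and x :: "real \<Rightarrow> 'n \<Rightarrow> real^'d"
    and kl :: "nat \<Rightarrow> nat"
    and h :: real
  assumes "CARD('n) > 1"
    and "valid_network A"
    and "assumption3 A tk"
    and "simultaneously_structurally_balanced A V1 V2"
    and "solves_network A x"
    and "strict_mono kl" and "kl 0 = 0" and "h > 0"
    and "\<forall>l. tk (kl (Suc l)) - tk (kl l) \<le> h"
    and "\<forall>l. has_pn_spanning_tree_integral A (tk (kl l)) (tk (kl (Suc l)))"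
  shows "bipartite_consensus x \<and>
    (let \<sigma> = (\<lambda>i. if i \<in> V1 then (1::real) else -1);
         v = (1 / real CARD('n)) *\<^sub>R (\<Sum>j\<in>UNIV. \<sigma> j *\<^sub>R x 0 j)
     in \<forall>i. ((\<lambda>t. x t i) \<longlongrightarrow> \<sigma> i *\<^sub>R v) at_top)"
proof -
  interpret ctx A tk V1 V2 x kl h
    using assms by (simp add: ctx_def)
  show ?thesis by (rule final)
qed

end
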